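(* Let $f:\mathbb{R}^n\to\mathbb{R}^n$ be continuously differentiable, $q:\mathbb{R}^n\to\mathbb{R}\cup\{+\infty\}$ proper, convex and lower semicontinuous, and $H=f+\partial q$. Assume that $H$ is metrically regular at $(\bar x,0)\in\mathrm{gph}\, H$ and that $\partial q$ is semismooth$^*$ at $(\bar x,-f(\bar x))$. Then for every $\gamma>0$ there exists a neighborhood $U$ of $\bar x$ such that for every starting point $x^{(0)}\in U$ the following iteration converges superlinearly to $\bar x$: given $x^{(k)}$, compute $u^{(k)}=u_\gamma(x^{(k)})$, choose a symmetric positive semidefinite matrix $G^{(k)}$ with $\|G^{(k)}\|\le1$ and $G^{(k)}v^*\in D^*(\partial q)\bigl(x^{(k)}+u^{(k)},-\gamma u^{(k)}-f(x^{(k)})\bigr)((I-G^{(k)})v^* )$ for all $v^*\in\mathbb{R}^n$, solve \[((I-G^{(k)})\nabla f(x^{(k)})+G^{(k)})\Delta x^{(k)}=(\gamma(I-G^{(k)})+G^{(k)})u^{(k)},\] and set $x^{(k+1)}=x^{(k)}+\Delta x^{(k)}$.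
   Context: $u_\gamma(x)=\arg\min_u\bigl(\tfrac12\gamma\|u\|^2+\langle f(x),u\rangle+q(x+u)\bigr)$. Metric regularity of $F$ around $(\bar x,\bar y)$: $\mathrm{gph}\, F$ locally closed and $\operatorname{dist}(x,F^{-1}(y))\le\kappa\operatorname{dist}(y,F(x))$ for all $(x,y)$ in a neighborhood of $(\bar x,\bar y)$, for some $\kappa\ge0$. For a closed set $C$ and $\bar z\in C$: $T_C(\bar z)=\{w:\exists t_k\downarrow0,w_k\to w,\bar z+t_kw_k\in C\}$; $\widehat N_C(\bar z)=T_C(\bar z)^\circ$; for a direction $w$, $N_C(\bar z;w)$ is the set of $z^*$ with $z_k^*\to z^*$, $z_k^*\in\widehat N_C(\bar z+t_kw_k)$ for some $t_k\downarrow0$, $w_k\to w$, $\bar z+t_kw_k\in C$; $N_C(\bar z)=N_C(\bar z;0)$. Coderivatives: $D^*F(\bar x,\bar y)(v^* )=\{u^*:(u^*,-v^* )\in N_{\mathrm{gph}\, F}(\bar x,\bar y)\}$ and $D^*F((\bar x,\bar y);(u,v))(v^* )=\{u^*:(u^*,-v^* )\in N_{\mathrm{gph}\, F}((\bar x,\bar y);(u,v))\}$, with $\mathrm{gph}\, D^*F(\cdot)=\{(v^*,u^* ):u^*\in D^*F(\cdot)(v^* )\}$. $F$ is semismooth$^*$ at $(\bar x,\bar y)$ if $\langle u^*,u\rangle=\langle v^*,v\rangle$ for all $(u,v)$ and all $(v^*,u^* )\in\mathrm{gph}\, D^*F((\bar x,\bar y);(u,v))$. Superlinear convergence: $x^{(k)}\to\bar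 x$ and $\|x^{(k+1)}-\bar x\|=o(\|x^{(k)}-\bar x\|)$. *)

theory Defs
  imports "HOL-Analysis.Analysis" "HOL-Library.Landau_Symbols"
begin

definition proper_fun :: "('a \<Rightarrow> ereal) \<Rightarrow> bool" where
  "proper_fun q \<longleftrightarrow> (\<forall>x. q x \<noteq> -\<infinity>) \<and> (\<exists>x. q x < \<infinity>)"

definition convex_fun :: "('a::real_vector \<Rightarrow> ereal) \<Rightarrow> bool" where
  "convex_fun q \<longleftrightarrow> (\<forall>x y t. 0 < t \<and> t < 1 \<longrightarrow>
      q (t *\<^sub>R x + (1 - t) *\<^sub>R y) \<le> ereal t * q x + ereal (1 - t) * q y)"

definition lsc_fun :: "('a::topological_space \<Rightarrow> ereal) \<Rightarrow> bool" where
  "lsc_fun q \<longleftrightarrow> (\<forall>x. q x \<le> Liminf (at x) q)"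

definition subdiff :: "('a::real_inner \<Rightarrow> ereal) \<Rightarrow> 'a \<Rightarrow> 'a set" where
  "subdiff q x = {v. \<bar>q x\<bar> \<noteq> \<infinity> \<and> (\<forall>y. q x + ereal (v \<bullet> (y - x)) \<le> q y)}"

definition gph :: "('a \<Rightarrow> 'b set) \<Rightarrow> ('a \<times> 'b) set" where
  "gph F = {(x, y). y \<in> F x}"

definition inv_map :: "('a \<Rightarrow> 'b set) \<Rightarrow> 'b \<Rightarrow> 'a set" where
  "inv_map F y = {x. y \<in> F x}"

text \<open>Metric regularity around (xb,yb); dist(.,empty set) = +infinity is handled explicitly.\<close>
definition metrically_regular ::
  "('a::real_normed_vector \<Rightarrow> 'b::real_normed_vector set) \<Rightarrow> 'a \<Rightarrow> 'b \<Rightarrow> bool" where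
  "metrically_regular F xb yb \<longleftrightarrow>
     (\<exists>\<epsilon>>0. closed (gph F \<inter> cball (xb, yb) \<epsilon>)) \<and>
     (\<exists>\<kappa>\<ge>0. \<exists>\<delta>>0. \<forall>x y. dist x xb < \<delta> \<and> dist y yb < \<delta> \<longrightarrow>
        (F x \<noteq> {} \<longrightarrow> inv_map F y \<noteq> {} \<and>
           infdist x (inv_map F y) \<le> \<kappa> * infdist y (F x)))"

definition tangent_cone :: "'a::real_normed_vector set \<Rightarrow> 'a \<Rightarrow> 'a set" where
  "tangent_cone C z = {w. \<exists>t ws. (\<forall>k. t k > 0) \<and> t \<longlonglongrightarrow> 0 \<and> ws \<longlonglongrightarrow> w \<and>
      (\<forall>k. z + t k *\<^sub>R ws k \<in> C)}"

definition polar :: "'a::real_inner set \<Rightarrow> 'a set" where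
  "polar T = {s. \<forall>w\<in>T. s \<bullet> w \<le> 0}"

definition regular_normal_cone :: "'a::real_inner set \<Rightarrow> 'a \<Rightarrow> 'a set" where
  "regular_normal_cone C z = polar (tangent_cone C z)"

definition dir_normal_cone :: "'a::real_inner set \<Rightarrow> 'a \<Rightarrow> 'a \<Rightarrow> 'a set" where
  "dir_normal_cone C z w = {s. \<exists>t ws ss. (\<forall>k. t k > 0) \<and> t \<longlonglongrightarrow> 0 \<and> ws \<longlonglongrightarrow> w \<and>
      (\<forall>k. z + t k *\<^sub>R ws k \<in> C) \<and>
      (\<forall>k. ss k \<in> regular_normal_cone C (z + t k *\<^sub>R ws k)) \<and> ss \<longlonglongrightarrow> s}"

definition limiting_normal_cone :: "'a::real_inner set \<Rightarrow> 'a \<Rightarrow> 'a set" where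
  "limiting_normal_cone C z = dir_normal_cone C z 0"

definition coderiv :: "('a::real_inner \<Rightarrow> 'b::real_inner set) \<Rightarrow> 'a \<Rightarrow> 'b \<Rightarrow> 'b \<Rightarrow> 'a set" where
  "coderiv F x y vs = {us. (us, - vs) \<in> limiting_normal_cone (gph F) (x, y)}"

definition dir_coderiv ::
  "('a::real_inner \<Rightarrow> 'b::real_inner set) \<Rightarrow> 'a \<Rightarrow> 'b \<Rightarrow> 'a \<Rightarrow> 'b \<Rightarrow> 'b \<Rightarrow> 'a set" where
  "dir_coderiv F x y u v vs = {us. (us, - vs) \<in> dir_normal_cone (gph F) (x, y) (u, v)}"

definition semismooth_star :: "('a::real_inner \<Rightarrow> 'b::real_inner set) \<Rightarrow> 'a \<Rightarrow> 'b \<Rightarrow> bool" where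
  "semismooth_star F x y \<longleftrightarrow>
     (\<forall>u v vs us. us \<in> dir_coderiv F x y u v vs \<longrightarrow> us \<bullet> u = vs \<bullet> v)"

definition u_gamma :: "real \<Rightarrow> ('a::real_inner \<Rightarrow> 'a) \<Rightarrow> ('a \<Rightarrow> ereal) \<Rightarrow> 'a \<Rightarrow> 'a" where
  "u_gamma \<gamma> f q x = (THE u. \<forall>w.
      ereal (\<gamma> / 2 * norm u ^ 2 + f x \<bullet> u) + q (x + u)
        \<le> ereal (\<gamma> / 2 * norm w ^ 2 + f x \<bullet> w) + q (x + w))"

end

theory Submission
  imports Defs
begin
lemma subdiff_finite: "v \<in> subdiff q x \<Longrightarrow> \<exists>c. q x = ereal c"
  unfolding subdiff_def by (cases "q x") auto

lemma subdiff_ineq: "v \<in> subdiff q x \<Longrightarrow> q x + ereal (v \<bullet> (y - x)) \<le> q y"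
  unfolding subdiff_def by auto

lemma subdiff_mono:
  assumes "v1 \<in> subdiff q x1" "v2 \<in> subdiff q x2"
  shows "(v1 - v2) \<bullet> (x1 - x2) \<ge> 0"
proof -
  obtain c1 where c1: "q x1 = ereal c1" using subdiff_finite[OF assms(1)] by blast
  obtain c2 where c2: "q x2 = ereal c2" using subdiff_finite[OF assms(2)] by blast
  have "c1 + v1 \<bullet> (x2 - x1) \<le> c2" using subdiff_ineq[OF assms(1), of x2] c1 c2 by simp
  moreover have "c2 + v2 \<bullet> (x1 - x2) \<le> c1" using subdiff_ineq[OF assms(2), of x1] c1 c2 by simp
  ultimately show ?thesis by (simp add: algebra_simps inner_diff_left inner_diff_right)
qed

definition mnorm :: "real^'n^'m \<Rightarrow> real" where
  "mnorm A = (\<Sum>i\<in>UNIV. \<Sum>j\<in>UNIV. \<bar>A $ i $ j\<bar>)"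

lemma mnorm_bound: "norm (A *v x) \<le> mnorm A * norm x"
proof -
  have "norm (A *v x) \<le> onorm ((*v) A) * norm x"
    by (rule onorm) simp
  also have "\<dots> \<le> mnorm A * norm x"
    by (rule mult_right_mono) (auto simp: mnorm_def onorm_le_matrix_component_sum)
  finally show ?thesis .
qed

lemma mnorm_transpose: "mnorm (transpose A) = mnorm A"
  unfolding mnorm_def transpose_def by (simp, rule sum.swap)

lemma mnorm_nonneg: "mnorm A \<ge> 0"
  unfolding mnorm_def by (simp add: sum_nonneg)

lemma mnorm_triangle: "mnorm (A + B) \<le> mnorm A + mnorm B"
  unfolding mnorm_def by (simp add: sum.distrib[symmetric] sum_mono abs_triangle_ineq)

lemma continuous_on_mnorm: "continuous_on S g \<Longrightarrow> continuous_on S (\<lambda>x. mnorm (g x))"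
  unfolding mnorm_def by (intro continuous_intros)

lemma matrix_sym_inner:
  fixes G :: "real^'n^'n"
  assumes "transpose G = G"
  shows "(G *v w) \<bullet> a = w \<bullet> (G *v a)"
  by (metis assms dot_lmul_matrix transpose_matrix_vector)

lemma transpose_inner: "(transpose A *v w) \<bullet> a = w \<bullet> ((A::real^'n^'m) *v a)"
  by (metis dot_lmul_matrix transpose_matrix_vector)

lemma limiting_closure:
  fixes g :: "'a::real_inner \<Rightarrow> 'a \<Rightarrow> real"
  assumes V: "open V" "z \<in> V" and s: "s \<in> limiting_normal_cone C z"
    and g: "continuous_on UNIV (\<lambda>p. g (fst p) (snd p))"
    and reg: "\<And>z' r. z' \<in> C \<Longrightarrow> z' \<in> V \<Longrightarrow> r \<in> regular_normal_cone C z' \<Longrightarrow> g z' r \<le> 0"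
  shows "g z s \<le> 0"
proof -
  from s obtain t ws ss where h: "\<forall>k. t k > 0" "t \<longlonglongrightarrow> 0" "ws \<longlonglongrightarrow> 0"
     "\<forall>k. z + t k *\<^sub>R ws k \<in> C" "\<forall>k. ss k \<in> regular_normal_cone C (z + t k *\<^sub>R ws k)" "ss \<longlonglongrightarrow> s"
    unfolding limiting_normal_cone_def dir_normal_cone_def by (auto simp del: add_0)
  have "(\<lambda>k. t k *\<^sub>R ws k) \<longlonglongrightarrow> 0 *\<^sub>R 0" by (intro tendsto_intros h)
  then have "(\<lambda>k. z + t k *\<^sub>R ws k) \<longlonglongrightarrow> z + 0 *\<^sub>R 0" by (rule tendsto_add[OF tendsto_const])
  then have zk: "(\<lambda>k. z + t k *\<^sub>R ws k) \<longlonglongrightarrow> z" by simp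
  then have ev: "eventually (\<lambda>k. z + t k *\<^sub>R ws k \<in> V) sequentially"
    by (rule topological_tendstoD[OF _ V(1,2)])
  have pk: "(\<lambda>k. (z + t k *\<^sub>R ws k, ss k)) \<longlonglongrightarrow> (z, s)"
    using zk h(6) by (rule tendsto_Pair)
  have ic: "isCont (\<lambda>p. g (fst p) (snd p)) (z, s)"
    using g by (simp add: continuous_on_eq_continuous_at)
  have lim: "(\<lambda>k. g (z + t k *\<^sub>R ws k) (ss k)) \<longlonglongrightarrow> g z s"
    using isCont_tendsto_compose[OF ic pk] by simp
  show ?thesis
  proof (rule tendsto_upperbound[OF lim])
    show "\<forall>\<^sub>F k in sequentially. g (z + t k *\<^sub>R ws k) (ss k) \<le> 0"
      using ev proof (rule eventually_mono)
      fix k assume "z + t k *\<^sub>R ws k \<in> V"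
      then show "g (z + t k *\<^sub>R ws k) (ss k) \<le> 0" using reg h by blast
    qed
  qed simp
qed

lemma lsc_open:
  assumes "lsc_fun q" "c < q p"
  shows "\<exists>S. open S \<and> p \<in> S \<and> (\<forall>y\<in>S. c < q y)"
proof -
  have "q p \<le> Liminf (at p) q" using assms(1) unfolding lsc_fun_def by blast
  then have "eventually (\<lambda>y. c < q y) (at p)" using assms(2) le_Liminf_iff by blast
  then obtain S where "open S" "p \<in> S" "\<forall>y\<in>S. y \<noteq> p \<longrightarrow> c < q y"
    unfolding eventually_at_topological by blast
  then show ?thesis using assms(2) by metis
qed

lemma proper_not_minf: "proper_fun q \<Longrightarrow> q y \<noteq> -\<infinity>"
  unfolding proper_fun_def by blast

context
  fixes \<gamma> :: real and q :: "'a::euclidean_space \<Rightarrow> ereal" and a x :: 'a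
  assumes gpos: "\<gamma> > 0" and qp: "proper_fun q" and qc: "convex_fun q" and ql: "lsc_fun q"
begin

definition QfF :: "'a \<Rightarrow> real" where "QfF w = \<gamma> / 2 * norm w ^ 2 + a \<bullet> w"
definition phiF :: "'a \<Rightarrow> ereal" where "phiF w = ereal (QfF w) + q (x + w)"

lemma cont_Qf: "continuous_on UNIV QfF"
  unfolding QfF_def by (intro continuous_intros)

lemma phi_lsc:
  assumes "c < phiF w"
  shows "\<exists>S. open S \<and> w \<in> S \<and> (\<forall>v\<in>S. c < phiF v)"
proof (cases c)
  case MInf
  have "c < phiF v" for v
  proof (cases "q (x + v)")
    case MInf then show ?thesis using proper_not_minf[OF qp] by blast
  qed (auto simp: phiF_def MInf)
  then show ?thesis by blast
next
  case PInf
  then show ?thesis using assms by simp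
next
  case (real c')
  obtain m where m1: "ereal m < q (x + w)" and m2: "c' - QfF w < m"
  proof (cases "q (x + w)")
    case (real b)
    then have "c' < QfF w + b" using assms \<open>c = ereal c'\<close> real unfolding phiF_def by simp
    then show ?thesis using that[of "(c' - QfF w + b) / 2"] real by auto
  next
    case PInf
    then show ?thesis using that[of "c' - QfF w + 1"] by auto
  next
    case MInf
    then show ?thesis using proper_not_minf[OF qp] by blast
  qed
  obtain S1 where S1: "open S1" "x + w \<in> S1" "\<forall>y\<in>S1. ereal m < q y"
    using lsc_open[OF ql m1] by blast
  define S where "S = ((\<lambda>v. x + v) -` S1) \<inter> (QfF -` {c' - m <..})"
  have "open ((\<lambda>v. x + v) -` S1)"
    by (rule continuous_open_vimage[OF S1(1)]) (intro continuous_intros)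
  moreover have "open (QfF -` {c' - m <..})"
    using cont_Qf by (simp add: continuous_on_open_vimage)
  ultimately have "open S" unfolding S_def by blast
  moreover have "w \<in> S" using S1 m2 unfolding S_def by auto
  moreover have "c < phiF v" if "v \<in> S" for v
  proof -
    have h1: "ereal m < q (x + v)" and h2: "c' - m < QfF v" using that S1 unfolding S_def by auto
    show ?thesis
    proof (cases "q (x + v)")
      case (real b)
      then show ?thesis using h1 h2 \<open>c = ereal c'\<close> unfolding phiF_def by simp
    next
      case PInf
      then show ?thesis using \<open>c = ereal c'\<close> unfolding phiF_def by simp
    next
      case MInf
      then show ?thesis using h1 by simp
    qed
  qed
  ultimately show ?thesis by blast
qed

lemma quad_big:
  fixes r al be g :: real
  assumes "g > 0" "al \<ge> 0" "be \<ge> 0" "r > 1 + 2 * (al + be) / g"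
  shows "g / 2 * r ^ 2 - al * r - be > 0"
proof -
  have r1: "r > 1" using assms by (smt (verit) divide_nonneg_pos)
  have "g * r > 2 * (al + be)" using assms
    by (smt (verit, ccfv_SIG) divide_pos_pos mult.commute pos_divide_less_eq)
  then have "g / 2 * r > al + be" by simp
  then have "g / 2 * r * r > (al + be) * r" using r1 by (intro mult_strict_right_mono) auto
  moreover have "be * 1 \<le> be * r" using r1 assms by (intro mult_left_mono) auto
  then have "(al + be) * r \<ge> al * r + be" by (simp add: algebra_simps)
  ultimately show ?thesis by (simp add: power2_eq_square algebra_simps)
qed

lemma phi_exists_min:
  assumes v0: "v0 \<in> subdiff q xb"
  shows "\<exists>u. \<forall>w. phiF u \<le> phiF w"
proof -
  obtain c0 where c0: "q xb = ereal c0" using subdiff_finite[OF v0] by blast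
  have lb: "ereal (c0 + v0 \<bullet> (y - xb)) \<le> q y" for y
    using subdiff_ineq[OF v0, of y] c0 by simp
  define l where "l w = QfF w + c0 + v0 \<bullet> (x + w - xb)" for w
  have phil: "ereal (l w) \<le> phiF w" for w
    using lb[of "x + w"] unfolding phiF_def l_def
    by (metis add.assoc add_left_mono plus_ereal.simps(1))
  obtain p0 where "q p0 < \<infinity>" using qp unfolding proper_fun_def by blast
  then obtain m1 where m1: "q p0 = ereal m1" using proper_not_minf[OF qp, of p0] by (cases "q p0") auto
  define w0 where "w0 = p0 - x"
  define M where "M = QfF w0 + m1"
  have phiw0: "phiF w0 = ereal M" unfolding phiF_def M_def w0_def using m1 by simp
  define al where "al = norm a + norm v0"
  define be where "be = \<bar>c0\<bar> + norm v0 * norm (x - xb) + \<bar>M\<bar>"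
  define R where "R = 2 + 2 * (al + be) / \<gamma>"
  have big: "phiF w > ereal M" if "norm w > R" for w
  proof -
    have "\<gamma> / 2 * norm w ^ 2 - al * norm w - be > 0"
      by (rule quad_big) (use gpos that in \<open>auto simp: al_def be_def R_def\<close>)
    moreover have "l w \<ge> \<gamma> / 2 * norm w ^ 2 - al * norm w - be + M"
    proof -
      have "a \<bullet> w \<ge> - (norm a * norm w)" using Cauchy_Schwarz_ineq2[of a w] by linarith
      moreover have "v0 \<bullet> (x + w - xb) \<ge> - (norm v0 * norm (w + (x - xb)))"
        using Cauchy_Schwarz_ineq2[of v0 "w + (x - xb)"] by (simp add: algebra_simps)
      moreover have "norm v0 * norm (w + (x - xb)) \<le> norm v0 * norm w + norm v0 * norm (x - xb)"
        by (metis distrib_left mult_left_mono norm_ge_zero norm_triangle_ineq)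
      ultimately show ?thesis unfolding l_def QfF_def al_def be_def by (simp add: algebra_simps)
    qed
    ultimately have "l w > M" by linarith
    then have "ereal M < ereal (l w)" by simp
    then show ?thesis using phil[of w] by (rule less_le_trans)
  qed
  define K where "K = cball (0::'a) R"
  have w0K: "w0 \<in> K" using big[of w0] phiw0 unfolding K_def by force
  define m where "m = (INF w\<in>K. phiF w)"
  have "\<exists>ws\<in>K. phiF ws = m"
  proof (rule ccontr)
    assume nex: "\<not> ?thesis"
    have lt: "m < phiF w" if "w \<in> K" for w
      using nex that unfolding m_def by (metis INF_lower order_le_less)
    have "\<forall>w\<in>K. \<exists>c S. m < c \<and> open S \<and> w \<in> S \<and> (\<forall>v\<in>S. c < phiF v)"
    proof
      fix w assume "w \<in> K"
      then obtain c where "m < c" "c < phiF w" using lt dense by blast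
      then show "\<exists>c S. m < c \<and> open S \<and> w \<in> S \<and> (\<forall>v\<in>S. c < phiF v)" using phi_lsc by blast
    qed
    then obtain cf Sf where cS: "\<And>w. w \<in> K \<Longrightarrow> m < cf w \<and> open (Sf w) \<and> w \<in> Sf w \<and> (\<forall>v\<in>Sf w. cf w < phiF v)"
      by metis
    have "compact K" unfolding K_def by simp
    then obtain W where W: "W \<subseteq> K" "finite W" "K \<subseteq> \<Union> (Sf ` W)"
      by (rule compactE_image[of K K Sf]) (use cS in auto)
    have "W \<noteq> {}" using W w0K by auto
    define cs where "cs = Min (cf ` W)"
    have "m < cs" unfolding cs_def using W \<open>W \<noteq> {}\<close> cS by (auto simp: Min_gr_iff)
    moreover have "cs \<le> m" unfolding m_def
    proof (rule INF_greatest)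
      fix v assume "v \<in> K"
      then obtain w where "w \<in> W" "v \<in> Sf w" using W by blast
      then have "cf w < phiF v" using cS W by blast
      moreover have "cs \<le> cf w" unfolding cs_def using W \<open>w \<in> W\<close> by simp
      ultimately show "cs \<le> phiF v" by simp
    qed
    ultimately show False by simp
  qed
  then obtain ws where ws: "ws \<in> K" "phiF ws = m" by blast
  have "phiF ws \<le> phiF w" for w
  proof (cases "w \<in> K")
    case True
    then show ?thesis using ws unfolding m_def by (simp add: INF_lower)
  next
    case False
    then have "phiF w > ereal M" using big unfolding K_def by simp
    moreover have "phiF ws \<le> phiF w0" using ws w0K unfolding m_def by (simp add: INF_lower)
    ultimately show ?thesis using phiw0 by simp
  qed
  then show ?thesis by blast
qed

lemma le_zero_from_small:
  fixes X C :: real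
  assumes "\<And>t. 0 < t \<Longrightarrow> t < 1 \<Longrightarrow> X \<le> t * C"
  shows "X \<le> 0"
proof (rule ccontr)
  assume "\<not> X \<le> 0"
  then have X: "X > 0" by simp
  have "X \<le> (1/2) * C" using assms[of "1/2"] by simp
  then have C: "C > 0" using X by simp
  define t where "t = min (1/2) (X / (2 * C))"
  have t: "0 < t" "t < 1" using X C unfolding t_def by auto
  have "t * C \<le> X / (2 * C) * C" unfolding t_def using C by (intro mult_right_mono) auto
  also have "\<dots> = X / 2" using C by simp
  finally show False using assms[OF t] X by simp
qed

lemma phi_opt:
  assumes mn: "\<forall>w. phiF u \<le> phiF w"
  shows "- \<gamma> *\<^sub>R u - a \<in> subdiff q (x + u)"
proof -
  obtain p0 where "q p0 < \<infinity>" using qp unfolding proper_fun_def by blast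
  then have "phiF (p0 - x) < \<infinity>" unfolding phiF_def by simp
  then have "phiF u < \<infinity>" using mn by (meson le_less_trans)
  then have "q (x + u) < \<infinity>" unfolding phiF_def by simp
  then obtain A where A: "q (x + u) = ereal A" using proper_not_minf[OF qp, of "x + u"] by (cases "q (x + u)") auto
  have "q (x + u) + ereal ((- \<gamma> *\<^sub>R u - a) \<bullet> (y - (x + u))) \<le> q y" for y
  proof (cases "q y")
    case PInf then show ?thesis by simp
  next
    case MInf then show ?thesis using proper_not_minf[OF qp] by blast
  next
    case (real B)
    define d where "d = y - (x + u)"
    have key: "A - B - (\<gamma> *\<^sub>R u + a) \<bullet> d \<le> t * (\<gamma> / 2 * norm d ^ 2)" if t: "0 < t" "t < 1" for t
    proof -
      have eqv: "x + (u + t *\<^sub>R d) = t *\<^sub>R y + (1 - t) *\<^sub>R (x + u)"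
        unfolding d_def by (simp add: algebra_simps)
      have "q (x + (u + t *\<^sub>R d)) \<le> ereal t * q y + ereal (1 - t) * q (x + u)"
        using qc t unfolding convex_fun_def eqv by blast
      then have c1: "q (x + (u + t *\<^sub>R d)) \<le> ereal (t * B + (1 - t) * A)" using A real by simp
      have "phiF u \<le> phiF (u + t *\<^sub>R d)" using mn by blast
      also have "\<dots> \<le> ereal (QfF (u + t *\<^sub>R d)) + ereal (t * B + (1 - t) * A)"
        unfolding phiF_def using c1 by (rule add_left_mono)
      finally have "QfF u + A \<le> QfF (u + t *\<^sub>R d) + (t * B + (1 - t) * A)"
        unfolding phiF_def A by simp
      moreover have "QfF (u + t *\<^sub>R d) = QfF u + t * (\<gamma> * (u \<bullet> d) + a \<bullet> d) + t * (t * (\<gamma> / 2 * norm d ^ 2))"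
        unfolding QfF_def power2_norm_eq_inner
        by (simp add: inner_add_left inner_add_right algebra_simps power2_eq_square inner_commute[of d u])
      ultimately have "t * A \<le> t * (\<gamma> * (u \<bullet> d) + a \<bullet> d) + t * (t * (\<gamma> / 2 * norm d ^ 2)) + t * B"
        by (simp add: algebra_simps)
      then have "t * A \<le> t * ((\<gamma> * (u \<bullet> d) + a \<bullet> d) + t * (\<gamma> / 2 * norm d ^ 2) + B)"
        by (simp add: algebra_simps)
      then have "A \<le> (\<gamma> * (u \<bullet> d) + a \<bullet> d) + t * (\<gamma> / 2 * norm d ^ 2) + B"
        using t by simp
      then show ?thesis by (simp add: inner_add_left algebra_simps)
    qed
    have "A - B - (\<gamma> *\<^sub>R u + a) \<bullet> d \<le> 0" by (rule le_zero_from_small[OF key])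
    then show ?thesis using A real unfolding d_def by (simp add: inner_diff_left algebra_simps)
  qed
  then show ?thesis unfolding subdiff_def using A by simp
qed

lemma phi_unique:
  assumes "\<forall>w. phiF u1 \<le> phiF w" "\<forall>w. phiF u2 \<le> phiF w"
  shows "u1 = u2"
proof -
  have "((- \<gamma> *\<^sub>R u1 - a) - (- \<gamma> *\<^sub>R u2 - a)) \<bullet> ((x + u1) - (x + u2)) \<ge> 0"
    by (rule subdiff_mono[OF phi_opt[OF assms(1)] phi_opt[OF assms(2)]])
  then have "- \<gamma> * ((u1 - u2) \<bullet> (u1 - u2)) \<ge> 0" by (simp add: algebra_simps)
  then have "(u1 - u2) \<bullet> (u1 - u2) \<le> 0" using gpos by (simp add: mult_le_0_iff)
  then have "u1 - u2 = 0" by (metis inner_eq_zero_iff inner_ge_zero order_antisym)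
  then show ?thesis by simp
qed

end

lemma u_gamma_char:
  fixes q :: "'a::euclidean_space \<Rightarrow> ereal"
  assumes "\<gamma> > 0" "proper_fun q" "convex_fun q" "lsc_fun q" "v0 \<in> subdiff q xb"
  shows "- \<gamma> *\<^sub>R u_gamma \<gamma> f q x - f x \<in> subdiff q (x + u_gamma \<gamma> f q x)"
proof -
  let ?phiF = "phiF \<gamma> q (f x) x"
  obtain u where u: "\<forall>w. ?phiF u \<le> ?phiF w" using phi_exists_min[OF assms(1-4) assms(5)] by blast
  have uniq: "\<And>u'. \<forall>w. ?phiF u' \<le> ?phiF w \<Longrightarrow> u' = u"
    using phi_unique[OF assms(1-4)] u by blast
  have eq: "u_gamma \<gamma> f q x = u"
    unfolding u_gamma_def
  proof (rule the_equality)
    show "\<forall>w. ereal (\<gamma> / 2 * (norm u)\<^sup>2 + f x \<bullet> u) + q (x + u) \<le> ereal (\<gamma> / 2 * (norm w)\<^sup>2 + f x \<bullet> w) + q (x + w)"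
      using u by (simp add: phiF_def[OF assms(1-4)] QfF_def[OF assms(1-4)])
    fix u' assume "\<forall>w. ereal (\<gamma> / 2 * (norm u')\<^sup>2 + f x \<bullet> u') + q (x + u') \<le> ereal (\<gamma> / 2 * (norm w)\<^sup>2 + f x \<bullet> w) + q (x + w)"
    then show "u' = u" using uniq by (simp add: phiF_def[OF assms(1-4)] QfF_def[OF assms(1-4)])
  qed
  show ?thesis unfolding eq using phi_opt[OF assms(1-4) u] .
qed

lemma regular_normal_cone_scale:
  "s \<in> regular_normal_cone C z \<Longrightarrow> c \<ge> 0 \<Longrightarrow> c *\<^sub>R s \<in> regular_normal_cone C z"
  unfolding regular_normal_cone_def polar_def by (auto simp: mult_nonneg_nonpos)

lemma bw_subseq:
  fixes f :: "nat \<Rightarrow> 'a::{heine_borel,real_normed_vector}"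
  assumes "\<forall>n. norm (f n) \<le> B"
  obtains l r where "strict_mono r" "(f \<circ> r) \<longlonglongrightarrow> l"
proof -
  have "seq_compact (cball 0 B :: 'a set)" by (rule compact_imp_seq_compact) simp
  moreover have "\<forall>n. f n \<in> cball 0 B" using assms by simp
  ultimately show ?thesis using seq_compactE that by metis
qed

lemma ss_regular:
  fixes C :: "'a::euclidean_space set"
  assumes ss: "\<And>w s. s \<in> dir_normal_cone C zb w \<Longrightarrow> s \<bullet> w = 0" and e: "\<epsilon> > 0"
  shows "\<exists>\<delta>>0. \<forall>z r. z \<in> C \<and> norm (z - zb) < \<delta> \<and> r \<in> regular_normal_cone C z \<longrightarrow>
            \<bar>r \<bullet> (z - zb)\<bar> \<le> \<epsilon> * norm r * norm (z - zb)"
proof (rule ccontr)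
  assume neg: "\<not> ?thesis"
  have "\<forall>k::nat. \<exists>z r. z \<in> C \<and> norm (z - zb) < 1 / Suc k \<and> r \<in> regular_normal_cone C z \<and>
            \<bar>r \<bullet> (z - zb)\<bar> > \<epsilon> * norm r * norm (z - zb)"
  proof
    fix k :: nat
    have "1 / real (Suc k) > 0" by simp
    then have "\<not> (\<forall>z r. z \<in> C \<and> norm (z - zb) < 1 / Suc k \<and> r \<in> regular_normal_cone C z \<longrightarrow>
            \<bar>r \<bullet> (z - zb)\<bar> \<le> \<epsilon> * norm r * norm (z - zb))"
      using neg by blast
    then show "\<exists>z r. z \<in> C \<and> norm (z - zb) < 1 / Suc k \<and> r \<in> regular_normal_cone C z \<and>
            \<bar>r \<bullet> (z - zb)\<bar> > \<epsilon> * norm r * norm (z - zb)"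
      by (simp add: not_le)
  qed
  then obtain zs rs where h: "\<And>k. zs k \<in> C" "\<And>k. norm (zs k - zb) < 1 / Suc k"
    "\<And>k. rs k \<in> regular_normal_cone C (zs k)"
    "\<And>k. \<bar>rs k \<bullet> (zs k - zb)\<bar> > \<epsilon> * norm (rs k) * norm (zs k - zb)"
    by metis
  define t where "t k = norm (zs k - zb)" for k
  define w where "w k = (1 / t k) *\<^sub>R (zs k - zb)" for k
  define sg where "sg k = (1 / norm (rs k)) *\<^sub>R rs k" for k
  have tpos: "t k > 0" for k
  proof -
    have "zs k \<noteq> zb" using h(4)[of k] by auto
    then show ?thesis unfolding t_def by simp
  qed
  have rnz: "rs k \<noteq> 0" for k using h(4)[of k] by auto
  have zk: "zb + t k *\<^sub>R w k = zs k" for k using tpos[of k] unfolding w_def by simp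
  have nw: "norm (w k) = 1" for k using tpos[of k] unfolding w_def t_def by simp
  have ns: "norm (sg k) = 1" for k using rnz[of k] unfolding sg_def by simp
  have sgN: "sg k \<in> regular_normal_cone C (zb + t k *\<^sub>R w k)" for k
    unfolding zk sg_def by (rule regular_normal_cone_scale[OF h(3)]) simp
  have big: "\<bar>sg k \<bullet> w k\<bar> > \<epsilon>" for k
  proof -
    have "sg k \<bullet> w k = (rs k \<bullet> (zs k - zb)) / (norm (rs k) * t k)"
      unfolding sg_def w_def by simp
    moreover have "\<bar>rs k \<bullet> (zs k - zb)\<bar> > \<epsilon> * (norm (rs k) * t k)"
      using h(4)[of k] unfolding t_def by (simp add: mult.assoc)
    moreover have "norm (rs k) * t k > 0" using rnz[of k] tpos[of k] by simp
    ultimately show ?thesis by (simp add: abs_div pos_less_divide_eq)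
  qed
  have "\<forall>k. norm ((w k, sg k)) \<le> 2"
  proof
    fix k show "norm ((w k, sg k)) \<le> 2" using norm_Pair_le[of "w k" "sg k"] nw[of k] ns[of k] by simp
  qed
  then obtain l r where r: "strict_mono r" "((\<lambda>k. (w k, sg k)) \<circ> r) \<longlonglongrightarrow> l"
    by (rule bw_subseq)
  have wl: "(w \<circ> r) \<longlonglongrightarrow> fst l" using tendsto_fst[OF r(2)] by (simp add: o_def)
  have sl: "(sg \<circ> r) \<longlonglongrightarrow> snd l" using tendsto_snd[OF r(2)] by (simp add: o_def)
  have t0: "t \<longlonglongrightarrow> 0"
  proof (rule tendsto_sandwich[of "\<lambda>_. 0" _ _ "\<lambda>k. 1 / Suc k"])
    show "\<forall>\<^sub>F n in sequentially. 0 \<le> t n" using tpos by (simp add: less_imp_le)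
    show "\<forall>\<^sub>F n in sequentially. t n \<le> 1 / real (Suc n)" using h(2) unfolding t_def by (simp add: less_imp_le)
  qed (use LIMSEQ_inverse_real_of_nat in \<open>simp_all add: inverse_eq_divide\<close>)
  then have tr: "(t \<circ> r) \<longlonglongrightarrow> 0" using r(1) by (rule LIMSEQ_subseq_LIMSEQ)
  have "snd l \<in> dir_normal_cone C zb (fst l)"
  proof -
    have "\<forall>k. 0 < (t \<circ> r) k" using tpos by simp
    moreover have "\<forall>k. zb + (t \<circ> r) k *\<^sub>R (w \<circ> r) k \<in> C" using h(1) zk by simp
    moreover have "\<forall>k. (sg \<circ> r) k \<in> regular_normal_cone C (zb + (t \<circ> r) k *\<^sub>R (w \<circ> r) k)"
      using sgN by simp
    ultimately show ?thesis unfolding dir_normal_cone_def mem_Collect_eq using tr wl sl by blast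
  qed
  then have "snd l \<bullet> fst l = 0" by (rule ss)
  moreover have "(\<lambda>k. \<bar>(sg \<circ> r) k \<bullet> (w \<circ> r) k\<bar>) \<longlonglongrightarrow> \<bar>snd l \<bullet> fst l\<bar>"
    by (intro tendsto_intros sl wl)
  ultimately have "(\<lambda>k. \<bar>(sg \<circ> r) k \<bullet> (w \<circ> r) k\<bar>) \<longlonglongrightarrow> 0" by simp
  moreover have "\<forall>k. \<epsilon> \<le> \<bar>(sg \<circ> r) k \<bullet> (w \<circ> r) k\<bar>" using big by (simp add: less_imp_le)
  ultimately have "\<epsilon> \<le> 0" by (intro tendsto_lowerbound) (auto intro: always_eventually)
  then show False using e by simp
qed

lemma ss_limiting:
  fixes C :: "'a::euclidean_space set"
  assumes ss: "\<And>w s. s \<in> dir_normal_cone C zb w \<Longrightarrow> s \<bullet> w = 0" and e: "\<epsilon> > 0"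
  shows "\<exists>\<delta>>0. \<forall>z s. norm (z - zb) < \<delta> \<and> s \<in> limiting_normal_cone C z \<longrightarrow>
            \<bar>s \<bullet> (z - zb)\<bar> \<le> \<epsilon> * norm s * norm (z - zb)"
proof -
  obtain \<delta> where d: "\<delta> > 0" "\<forall>z r. z \<in> C \<and> norm (z - zb) < \<delta> \<and> r \<in> regular_normal_cone C z \<longrightarrow>
            \<bar>r \<bullet> (z - zb)\<bar> \<le> \<epsilon> * norm r * norm (z - zb)"
    using ss_regular[OF ss e] by blast
  have "\<bar>s \<bullet> (z - zb)\<bar> - \<epsilon> * norm s * norm (z - zb) \<le> 0"
    if "norm (z - zb) < \<delta>" "s \<in> limiting_normal_cone C z" for z s
  proof (rule limiting_closure[where g = "\<lambda>z s. \<bar>s \<bullet> (z - zb)\<bar> - \<epsilon> * norm s * norm (z - zb)"])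
    show "open (ball zb \<delta>)" by simp
    show "z \<in> ball zb \<delta>" using that by (simp add: dist_norm norm_minus_commute)
    show "s \<in> limiting_normal_cone C z" by fact
    show "continuous_on UNIV (\<lambda>p. \<bar>snd p \<bullet> (fst p - zb)\<bar> - \<epsilon> * norm (snd p) * norm (fst p - zb))"
      by (intro continuous_intros)
    fix z' r assume "z' \<in> C" "z' \<in> ball zb \<delta>" "r \<in> regular_normal_cone C z'"
    then show "\<bar>r \<bullet> (z' - zb)\<bar> - \<epsilon> * norm r * norm (z' - zb) \<le> 0"
      using d by (simp add: dist_norm norm_minus_commute)
  qed
  then show ?thesis using d(1) by auto
qed

lemma infdist_approx:
  assumes "A \<noteq> {}" "e > 0"
  shows "\<exists>a\<in>A. dist x a < infdist x A + e"
proof -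
  have "(INF a\<in>A. dist x a) < infdist x A + e" using assms by (simp add: infdist_notempty)
  then show ?thesis using assms(1) by (subst (asm) cINF_less_iff) auto
qed

lemma deriv_seq:
  assumes fd: "(f has_derivative L) (at x)" and t: "\<And>k. t k > 0" "t \<longlonglongrightarrow> 0" and h: "h \<longlonglongrightarrow> hl"
  shows "(\<lambda>k. (1 / t k) *\<^sub>R (f (x + t k *\<^sub>R h k) - f x)) \<longlonglongrightarrow> L hl"
proof -
  have bl: "bounded_linear L" using fd by (simp add: has_derivative_at_alt)
  have Lh: "(\<lambda>k. L (h k)) \<longlonglongrightarrow> L hl" using bounded_linear.tendsto[OF bl h] .
  have "bounded (range h)" using h by (rule convergent_imp_bounded)
  then obtain B where B: "B > 0" "\<And>k. norm (h k) \<le> B" unfolding bounded_pos by blast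
  define rem where "rem k = (1 / t k) *\<^sub>R (f (x + t k *\<^sub>R h k) - f x) - L (h k)" for k
  have "rem \<longlonglongrightarrow> 0"
  proof (rule LIMSEQ_I)
    fix e :: real assume e: "e > 0"
    obtain d where d: "d > 0" "\<forall>y. norm (y - x) < d \<longrightarrow> norm (f y - f x - L (y - x)) \<le> (e / (2 * B)) * norm (y - x)"
    proof -
      have "e / (2 * B) > 0" using e B by simp
      then show ?thesis using fd that unfolding has_derivative_at_alt by blast
    qed
    have "eventually (\<lambda>k. t k < d / B) sequentially"
      using t(2) d B by (simp add: order_tendstoD(2))
    then obtain N where N: "\<And>k. k \<ge> N \<Longrightarrow> t k < d / B" unfolding eventually_sequentially by blast
    show "\<exists>N. \<forall>k\<ge>N. norm (rem k - 0) < e"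
    proof (intro exI allI impI)
      fix k assume "k \<ge> N"
      then have tk: "t k * B < d" using N B by (simp add: pos_less_divide_eq)
      have nk: "norm (t k *\<^sub>R h k) \<le> t k * B" using B(2)[of k] t(1)[of k] by (simp add: mult_left_mono less_imp_le)
      have "norm (f (x + t k *\<^sub>R h k) - f x - L (t k *\<^sub>R h k)) \<le> (e / (2 * B)) * norm (t k *\<^sub>R h k)"
        using d(2)[rule_format, of "x + t k *\<^sub>R h k"] nk tk by simp
      also have "\<dots> \<le> (e / (2 * B)) * (t k * B)" using nk e B by (intro mult_left_mono) auto
      also have "\<dots> = t k * (e / 2)" using B by simp
      finally have *: "norm (f (x + t k *\<^sub>R h k) - f x - L (t k *\<^sub>R h k)) \<le> t k * (e / 2)" .
      have "rem k = (1 / t k) *\<^sub>R (f (x + t k *\<^sub>R h k) - f x - L (t k *\<^sub>R h k))"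
        unfolding rem_def using t(1)[of k] by (simp add: linear_simps(5)[OF bl] algebra_simps)
      then have "norm (rem k) = (1 / t k) * norm (f (x + t k *\<^sub>R h k) - f x - L (t k *\<^sub>R h k))"
        using t(1)[of k] by simp
      also have "\<dots> \<le> (1 / t k) * (t k * (e / 2))" using * t(1)[of k] by (intro mult_left_mono) auto
      also have "\<dots> < e" using t(1)[of k] e by simp
      finally show "norm (rem k - 0) < e" by simp
    qed
  qed
  then have "(\<lambda>k. rem k + L (h k)) \<longlonglongrightarrow> 0 + L hl" using Lh by (rule tendsto_add)
  then show ?thesis unfolding rem_def by simp
qed

lemma mr_regular:
  fixes f :: "real^'n \<Rightarrow> real^'n" and Df :: "real^'n \<Rightarrow> real^'n^'n" and q :: "real^'n \<Rightarrow> ereal"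
  assumes f_deriv: "\<And>x. (f has_derivative (\<lambda>h. Df x *v h)) (at x)"
    and metreg: "metrically_regular (\<lambda>x. {f x + v | v. v \<in> subdiff q x}) xb 0"
  shows "\<exists>\<kappa>\<ge>0. \<exists>\<delta>>0. \<forall>x y us vs. y \<in> subdiff q x \<and> norm (x - xb) < \<delta> \<and> norm (y + f x) < \<delta> \<and>
           (us, - vs) \<in> regular_normal_cone (gph (subdiff q)) (x, y) \<longrightarrow>
           norm vs \<le> \<kappa> * norm (us + transpose (Df x) *v vs)"
proof -
  define H where "H = (\<lambda>x. {f x + v | v. v \<in> subdiff q x})"
  obtain \<kappa> \<delta> where kd: "\<kappa> \<ge> 0" "\<delta> > 0"
    "\<And>x y. dist x xb < \<delta> \<Longrightarrow> dist y 0 < \<delta> \<Longrightarrow> H x \<noteq> {} \<Longrightarrow>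
        inv_map H y \<noteq> {} \<and> infdist x (inv_map H y) \<le> \<kappa> * infdist y (H x)"
    using metreg unfolding metrically_regular_def H_def by blast
  have main: "norm vs \<le> \<kappa> * norm (us + transpose (Df x) *v vs)"
    if hyp: "y \<in> subdiff q x" "norm (x - xb) < \<delta>" "norm (y + f x) < \<delta>"
      "(us, - vs) \<in> regular_normal_cone (gph (subdiff q)) (x, y)" for x y us vs
  proof -
    define d where "d = - vs"
    define Y where "Y = y + f x"
    have YH: "Y \<in> H x" unfolding Y_def H_def using hyp(1) by (auto simp: add.commute)
    define \<tau> where "\<tau> = (\<delta> - norm Y) / (norm d + 1)"
    have tau: "\<tau> > 0" unfolding \<tau>_def using hyp(3) Y_def
      by (intro divide_pos_pos) (simp, smt (verit) norm_ge_zero)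
    have small: "norm (Y + t *\<^sub>R d) < \<delta>" if "0 < t" "t \<le> \<tau>" for t
    proof -
      have "t * norm d \<le> \<tau> * norm d" using that by (simp add: mult_right_mono)
      also have "\<dots> < \<tau> * (norm d + 1)" using tau by simp
      also have "\<dots> = \<delta> - norm Y" unfolding \<tau>_def
        using norm_ge_zero[of d] by (simp add: add_nonneg_eq_0_iff)
      finally have "t * norm d < \<delta> - norm Y" .
      moreover have "norm (Y + t *\<^sub>R d) \<le> norm Y + t * norm d"
        using norm_triangle_ineq[of Y "t *\<^sub>R d"] that by simp
      ultimately show ?thesis by simp
    qed
    define t where "t k = \<tau> / Suc k" for k
    have tpos: "t k > 0" for k unfolding t_def using tau by simp
    have tle: "t k \<le> \<tau>" for k unfolding t_def using tau by (simp add: divide_le_eq)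
    have t0: "t \<longlonglongrightarrow> 0"
    proof -
      have "(\<lambda>k. \<tau> * inverse (real (Suc k))) \<longlonglongrightarrow> \<tau> * 0"
        by (intro tendsto_intros LIMSEQ_inverse_real_of_nat)
      then show ?thesis unfolding t_def by (simp add: divide_inverse)
    qed
    have "\<exists>xk. Y + t k *\<^sub>R d \<in> H xk \<and> dist x xk < \<kappa> * (t k * norm d) + t k * t k" for k
    proof -
      have "dist x xb < \<delta>" using hyp(2) by (simp add: dist_norm)
      moreover have "dist (Y + t k *\<^sub>R d) 0 < \<delta>" using small[OF tpos tle] by simp
      ultimately have mr: "inv_map H (Y + t k *\<^sub>R d) \<noteq> {}"
        "infdist x (inv_map H (Y + t k *\<^sub>R d)) \<le> \<kappa> * infdist (Y + t k *\<^sub>R d) (H x)"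
        using kd(3) YH by blast+
      have "infdist (Y + t k *\<^sub>R d) (H x) \<le> dist (Y + t k *\<^sub>R d) Y" by (rule infdist_le[OF YH])
      also have "\<dots> = t k * norm d" using tpos[of k] by (simp add: dist_norm)
      finally have "infdist x (inv_map H (Y + t k *\<^sub>R d)) \<le> \<kappa> * (t k * norm d)"
        using mr(2) kd(1) by (meson mult_left_mono order_trans)
      moreover obtain xk where "xk \<in> inv_map H (Y + t k *\<^sub>R d)"
        "dist x xk < infdist x (inv_map H (Y + t k *\<^sub>R d)) + t k * t k"
        using infdist_approx[OF mr(1), of "t k * t k" x] tpos[of k] by auto
      ultimately show ?thesis unfolding inv_map_def by auto
    qed
    then obtain xs where xs: "\<And>k. Y + t k *\<^sub>R d \<in> H (xs k)"
      "\<And>k. dist x (xs k) < \<kappa> * (t k * norm d) + t k * t k" by metis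
    define hs where "hs k = (1 / t k) *\<^sub>R (xs k - x)" for k
    have xs_eq: "x + t k *\<^sub>R hs k = xs k" for k unfolding hs_def using tpos[of k] by simp
    have hs_bd: "norm (hs k) \<le> \<kappa> * norm d + t k" for k
    proof -
      have "norm (hs k) = norm (xs k - x) / t k" unfolding hs_def using tpos[of k] by simp
      also have "\<dots> \<le> (\<kappa> * (t k * norm d) + t k * t k) / t k"
        using xs(2)[of k] tpos[of k] by (intro divide_right_mono) (auto simp: dist_norm norm_minus_commute)
      also have "\<dots> = \<kappa> * norm d + t k" using tpos[of k] by (simp add: field_simps)
      finally show ?thesis .
    qed
    have "\<forall>k. norm (hs k) \<le> \<kappa> * norm d + \<tau>" using hs_bd tle by (meson add_left_mono order_trans)
    then obtain hl r where r: "strict_mono r" "(hs \<circ> r) \<longlonglongrightarrow> hl" by (rule bw_subseq)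
    have tr: "(t \<circ> r) \<longlonglongrightarrow> 0" using t0 r(1) by (rule LIMSEQ_subseq_LIMSEQ)
    have hl_bd: "norm hl \<le> \<kappa> * norm d"
    proof -
      have "(\<lambda>k. norm ((hs \<circ> r) k)) \<longlonglongrightarrow> norm hl" using r(2) by (rule tendsto_norm)
      moreover have "(\<lambda>k. \<kappa> * norm d + (t \<circ> r) k) \<longlonglongrightarrow> \<kappa> * norm d + 0" by (intro tendsto_intros tr)
      moreover have "\<forall>k. norm ((hs \<circ> r) k) \<le> \<kappa> * norm d + (t \<circ> r) k" using hs_bd by simp
      ultimately show ?thesis by (intro tendsto_le[of sequentially]) (auto intro: always_eventually)
    qed
    have dq: "(\<lambda>k. (1 / (t \<circ> r) k) *\<^sub>R (f (x + (t \<circ> r) k *\<^sub>R (hs \<circ> r) k) - f x)) \<longlonglongrightarrow> Df x *v hl"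
      by (rule deriv_seq[OF f_deriv]) (use tpos tr r(2) in \<open>auto simp: o_def\<close>)
    define ws where "ws k = ((hs \<circ> r) k, d - (1 / (t \<circ> r) k) *\<^sub>R (f (x + (t \<circ> r) k *\<^sub>R (hs \<circ> r) k) - f x))" for k
    have wsl: "ws \<longlonglongrightarrow> (hl, d - Df x *v hl)"
      unfolding ws_def by (intro tendsto_Pair r(2) tendsto_diff tendsto_const dq)
    have wsin: "(x, y) + (t \<circ> r) k *\<^sub>R ws k \<in> gph (subdiff q)" for k
    proof -
      let ?k = "r k"
      have "Y + t ?k *\<^sub>R d \<in> H (xs ?k)" by (rule xs(1))
      then obtain v where v: "v \<in> subdiff q (xs ?k)" "Y + t ?k *\<^sub>R d = f (xs ?k) + v"
        unfolding H_def by blast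
      have e1: "x + t ?k *\<^sub>R hs ?k = xs ?k" by (rule xs_eq)
      have e2: "y + t ?k *\<^sub>R (d - (1 / t ?k) *\<^sub>R (f (xs ?k) - f x)) = v"
        using v(2) tpos[of ?k] unfolding Y_def by (simp add: algebra_simps)
      show ?thesis unfolding ws_def gph_def using e1 e2 v(1) by (simp add: e1)
    qed
    have tang: "(hl, d - Df x *v hl) \<in> tangent_cone (gph (subdiff q)) (x, y)"
      unfolding tangent_cone_def mem_Collect_eq
      using tpos tr wsl wsin by (intro exI[of _ "t \<circ> r"] exI[of _ ws]) simp
    have "(us, - vs) \<bullet> (hl, d - Df x *v hl) \<le> 0"
      using hyp(4) tang unfolding regular_normal_cone_def polar_def by blast
    then have "us \<bullet> hl + vs \<bullet> vs + vs \<bullet> (Df x *v hl) \<le> 0"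
      unfolding d_def by (simp add: inner_diff_right)
    moreover have "vs \<bullet> (Df x *v hl) = (transpose (Df x) *v vs) \<bullet> hl" by (rule transpose_inner[symmetric])
    ultimately have "vs \<bullet> vs \<le> - ((us + transpose (Df x) *v vs) \<bullet> hl)" by (simp add: inner_add_left)
    also have "\<dots> \<le> norm (us + transpose (Df x) *v vs) * norm hl"
      using Cauchy_Schwarz_ineq2[of "us + transpose (Df x) *v vs" hl] by linarith
    also have "\<dots> \<le> norm (us + transpose (Df x) *v vs) * (\<kappa> * norm vs)"
      using hl_bd unfolding d_def by (simp add: mult_left_mono)
    finally have "norm vs * norm vs \<le> norm vs * (\<kappa> * norm (us + transpose (Df x) *v vs))"
      by (simp add: power2_norm_eq_inner[symmetric] power2_eq_square algebra_simps)
    then show ?thesis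
      by (cases "vs = 0") (auto simp: kd(1))
  qed
  show ?thesis using kd(1,2) main by blast
qed

lemma transpose_add': "transpose (A + B) = transpose A + transpose (B :: real^'n^'m)"
  by (simp add: transpose_def vec_eq_iff)

lemma transpose_diff': "transpose (A - B) = transpose A - transpose (B :: real^'n^'m)"
  by (simp add: transpose_def vec_eq_iff)

lemma mv_neg: "A *v (- v) = - ((A::real^'n^'m) *v v)"
  using linear_neg[OF matrix_vector_mul_linear[of A]] by simp

lemma vec_id:
  fixes u d r ge gu gd gr :: "'a::real_vector"
  shows "ge + gu - ((- c *\<^sub>R u - d - r) - (- c *\<^sub>R gu - gd - gr)) = (d - gd + ge) + (c *\<^sub>R (u - gu) + gu) + (r - gr)"
  by (simp add: algebra_simps)

lemma mv_IG: "(mat 1 - G) *v v = v - G *v (v :: real^'n)"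
  by (simp add: matrix_vector_mult_diff_rdistrib)

lemma mv_M: "((mat 1 - G) ** A + G) *v v = A *v v - G *v (A *v v) + G *v (v :: real^'n)"
  by (simp add: matrix_vector_mult_add_rdistrib matrix_vector_mul_assoc[symmetric] mv_IG)

lemma mv_R: "(c *\<^sub>R (mat 1 - G) + G) *v v = c *\<^sub>R (v - G *v v) + G *v (v :: real^'n)"
  by (simp add: matrix_vector_mult_add_rdistrib scaleR_matrix_vector_assoc[symmetric] mv_IG)

lemma mvT_M:
  assumes "transpose G = (G :: real^'n^'n)"
  shows "transpose ((mat 1 - G) ** A + G) *v w = transpose A *v (w - G *v w) + G *v w"
proof -
  have "transpose ((mat 1 - G) ** A + G) = transpose A ** (mat 1 - G) + G"
    by (simp add: transpose_add' transpose_diff' matrix_transpose_mul assms)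
  then show ?thesis
    by (simp add: matrix_vector_mult_add_rdistrib matrix_vector_mul_assoc[symmetric] mv_IG)
qed

lemma G_bound:
  assumes "onorm (\<lambda>v. G *v v) \<le> 1"
  shows "norm (G *v v) \<le> norm (v :: real^'n)"
proof -
  have "norm (G *v v) \<le> onorm (\<lambda>v. G *v v) * norm v"
    by (rule onorm) simp
  also have "\<dots> \<le> 1 * norm v" using assms by (intro mult_right_mono) auto
  finally show ?thesis by simp
qed

lemma IG_bound:
  assumes "onorm (\<lambda>v. G *v v) \<le> 1"
  shows "norm ((mat 1 - G) *v v) \<le> 2 * norm (v :: real^'n)"
  using norm_triangle_ineq4[of v "G *v v"] G_bound[OF assms, of v] by (simp add: mv_IG)

context
  fixes f :: "real^'n \<Rightarrow> real^'n"
    and Df :: "real^'n \<Rightarrow> real^'n^'n"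
    and q :: "real^'n \<Rightarrow> ereal"
    and xb :: "real^'n"
  assumes f_deriv: "\<And>x. (f has_derivative (\<lambda>h. Df x *v h)) (at x)"
    and f_C1: "continuous_on UNIV Df"
    and q_proper: "proper_fun q" and q_convex: "convex_fun q" and q_lsc: "lsc_fun q"
    and in_gph: "(xb, 0) \<in> gph (\<lambda>x. {f x + v | v. v \<in> subdiff q x})"
    and metreg: "metrically_regular (\<lambda>x. {f x + v | v. v \<in> subdiff q x}) xb 0"
    and ssstar: "semismooth_star (subdiff q) xb (- f xb)"
begin

lemma v0: "- f xb \<in> subdiff q xb"
proof -
  obtain v where "v \<in> subdiff q xb" "0 = f xb + v" using in_gph unfolding gph_def by auto
  then show ?thesis by (metis add.commute add_eq_0_iff)
qed

lemma ucar: "\<gamma> > 0 \<Longrightarrow> - \<gamma> *\<^sub>R u_gamma \<gamma> f q x - f x \<in> subdiff q (x + u_gamma \<gamma> f q x)"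
  by (rule u_gamma_char[OF _ q_proper q_convex q_lsc v0])

lemma f_cont: "continuous_on UNIV f"
  using f_deriv by (meson continuous_at_imp_continuous_on has_derivative_continuous)

lemma lip: "\<exists>L\<ge>0. \<exists>\<delta>>0. \<forall>x. norm (x - xb) < \<delta> \<longrightarrow> norm (f x - f xb) \<le> L * norm (x - xb)"
proof -
  obtain d where d: "d > 0" "\<forall>y. norm (y - xb) < d \<longrightarrow> norm (f y - f xb - Df xb *v (y - xb)) \<le> 1 * norm (y - xb)"
    using f_deriv[of xb] unfolding has_derivative_at_alt by (meson zero_less_one)
  have "norm (f x - f xb) \<le> (mnorm (Df xb) + 1) * norm (x - xb)" if "norm (x - xb) < d" for x
  proof -
    have "norm (f x - f xb) \<le> norm (f x - f xb - Df xb *v (x - xb)) + norm (Df xb *v (x - xb))"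
      using norm_triangle_ineq[of "f x - f xb - Df xb *v (x - xb)" "Df xb *v (x - xb)"] by simp
    also have "\<dots> \<le> 1 * norm (x - xb) + mnorm (Df xb) * norm (x - xb)"
      using d(2) that mnorm_bound[of "Df xb" "x - xb"] by (intro add_mono) auto
    finally show ?thesis by (simp add: algebra_simps)
  qed
  moreover have "mnorm (Df xb) + 1 \<ge> 0" using mnorm_nonneg[of "Df xb"] by simp
  ultimately show ?thesis using d(1) by blast
qed

lemma ubound:
  assumes g: "\<gamma> > 0" and L: "L \<ge> 0" "\<And>x. norm (x - xb) < \<delta> \<Longrightarrow> norm (f x - f xb) \<le> L * norm (x - xb)"
    and x: "norm (x - xb) < \<delta>"
  shows "norm (u_gamma \<gamma> f q x) \<le> (1 + 2 * L / \<gamma>) * norm (x - xb)"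
proof -
  define u where "u = u_gamma \<gamma> f q x"
  define e where "e = x - xb"
  have "((- \<gamma> *\<^sub>R u - f x) - (- f xb)) \<bullet> ((x + u) - xb) \<ge> 0"
    using subdiff_mono[OF ucar[OF g, of x] v0] unfolding u_def .
  then have "(- \<gamma> *\<^sub>R u - (f x - f xb)) \<bullet> (e + u) \<ge> 0"
    unfolding e_def by (simp add: algebra_simps)
  then have h: "\<gamma> * (u \<bullet> u) \<le> - \<gamma> * (u \<bullet> e) - (f x - f xb) \<bullet> (e + u)"
    by (simp add: inner_diff_left inner_add_right algebra_simps inner_commute)
  have fl: "norm (f x - f xb) \<le> L * norm e" using L(2)[OF x] unfolding e_def .
  have "- \<gamma> * (u \<bullet> e) \<le> \<gamma> * (norm u * norm e)"
  proof -
    have "- (u \<bullet> e) \<le> norm u * norm e" using Cauchy_Schwarz_ineq2[of u e] by linarith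
    then have "\<gamma> * (- (u \<bullet> e)) \<le> \<gamma> * (norm u * norm e)" using g by (intro mult_left_mono) auto
    then show ?thesis by simp
  qed
  moreover have "- ((f x - f xb) \<bullet> (e + u)) \<le> L * norm e * (norm e + norm u)"
  proof -
    have "- ((f x - f xb) \<bullet> (e + u)) \<le> norm (f x - f xb) * norm (e + u)"
      using Cauchy_Schwarz_ineq2[of "f x - f xb" "e + u"] by linarith
    also have "\<dots> \<le> L * norm e * (norm e + norm u)"
      using fl L(1) norm_triangle_ineq[of e u] by (intro mult_mono) auto
    finally show ?thesis .
  qed
  ultimately have key: "\<gamma> * (norm u * norm u) \<le> \<gamma> * (norm u * norm e) + L * norm e * (norm e + norm u)"
    using h by (simp add: power2_norm_eq_inner[symmetric] power2_eq_square)
  show ?thesis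
  proof (cases "norm u \<le> norm e")
    case True
    moreover have "norm e \<le> (1 + 2 * L / \<gamma>) * norm e" using g L(1) by (simp add: algebra_simps)
    ultimately show ?thesis unfolding u_def e_def by linarith
  next
    case False
    then have ne: "norm e \<le> norm u" by simp
    have "L * norm e * (norm e + norm u) \<le> L * norm e * (2 * norm u)"
      using ne L(1) by (intro mult_left_mono) auto
    with key have "\<gamma> * (norm u * norm u) \<le> norm u * (\<gamma> * norm e + 2 * L * norm e)"
      by (simp add: algebra_simps)
    moreover have "norm u > 0" using False by (metis norm_ge_zero not_le order.strict_trans1)
    ultimately have "\<gamma> * norm u \<le> \<gamma> * norm e + 2 * L * norm e"
      by (simp add: mult.assoc[symmetric] mult.commute[of \<gamma>] mult_le_cancel_left_pos)
    then have "norm u \<le> (\<gamma> * norm e + 2 * L * norm e) / \<gamma>" using g by (simp add: field_simps)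
    also have "\<dots> = (1 + 2 * L / \<gamma>) * norm e" using g by (simp add: field_simps)
    finally show ?thesis unfolding u_def e_def .
  qed
qed

lemma dfcont: "\<eta> > 0 \<Longrightarrow> \<exists>\<delta>>0. \<forall>x. norm (x - xb) < \<delta> \<longrightarrow> mnorm (Df x - Df xb) \<le> \<eta>"
proof -
  assume eta: "\<eta> > 0"
  have "continuous_on UNIV (\<lambda>x. mnorm (Df x - Df xb))"
    by (intro continuous_on_mnorm continuous_intros f_C1)
  then have "isCont (\<lambda>x. mnorm (Df x - Df xb)) xb" by (simp add: continuous_on_eq_continuous_at)
  then obtain d where "d > 0" "\<forall>x. dist x xb < d \<longrightarrow> dist (mnorm (Df x - Df xb)) (mnorm (Df xb - Df xb)) < \<eta>"
    using eta unfolding continuous_at_eps_delta by blast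
  moreover have "mnorm (Df xb - Df xb) = 0" by (simp add: mnorm_def)
  ultimately show ?thesis by (metis dist_norm dist_real_def less_eq_real_def abs_less_iff diff_zero)
qed

lemma remainder: "\<eta> > 0 \<Longrightarrow> \<exists>\<delta>>0. \<forall>x. norm (x - xb) < \<delta> \<longrightarrow> norm (f x - f xb - Df x *v (x - xb)) \<le> \<eta> * norm (x - xb)"
proof -
  assume eta: "\<eta> > 0"
  obtain d1 where d1: "d1 > 0" "\<forall>y. norm (y - xb) < d1 \<longrightarrow> norm (f y - f xb - Df xb *v (y - xb)) \<le> (\<eta>/2) * norm (y - xb)"
    using f_deriv[of xb] eta unfolding has_derivative_at_alt by (meson half_gt_zero)
  obtain d2 where d2: "d2 > 0" "\<forall>x. norm (x - xb) < d2 \<longrightarrow> mnorm (Df x - Df xb) \<le> \<eta>/2"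
    using dfcont[of "\<eta>/2"] eta by auto
  have "norm (f x - f xb - Df x *v (x - xb)) \<le> \<eta> * norm (x - xb)" if "norm (x - xb) < min d1 d2" for x
  proof -
    have "f x - f xb - Df x *v (x - xb) = (f x - f xb - Df xb *v (x - xb)) - (Df x - Df xb) *v (x - xb)"
      by (simp add: matrix_vector_mult_diff_rdistrib)
    then have "norm (f x - f xb - Df x *v (x - xb)) \<le> norm (f x - f xb - Df xb *v (x - xb)) + norm ((Df x - Df xb) *v (x - xb))"
      by (metis norm_triangle_ineq4)
    also have "\<dots> \<le> (\<eta>/2) * norm (x - xb) + (\<eta>/2) * norm (x - xb)"
    proof (rule add_mono)
      show "norm (f x - f xb - Df xb *v (x - xb)) \<le> (\<eta>/2) * norm (x - xb)" using d1 that by auto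
      have "norm ((Df x - Df xb) *v (x - xb)) \<le> mnorm (Df x - Df xb) * norm (x - xb)" by (rule mnorm_bound)
      also have "\<dots> \<le> (\<eta>/2) * norm (x - xb)" using d2 that by (intro mult_right_mono) auto
      finally show "norm ((Df x - Df xb) *v (x - xb)) \<le> (\<eta>/2) * norm (x - xb)" .
    qed
    finally show ?thesis by simp
  qed
  then show ?thesis using d1 d2 by (metis min_less_iff_conj)
qed

lemma mr_limiting:
  "\<exists>\<kappa>2\<ge>0. \<exists>\<delta>>0. \<forall>z s. z \<in> gph (subdiff q) \<and> norm (fst z - xb) < \<delta> \<and> norm (snd z + f (fst z)) < \<delta> \<and>
      s \<in> limiting_normal_cone (gph (subdiff q)) z \<longrightarrow> norm (snd s) \<le> \<kappa>2 * norm (fst s - transpose (Df xb) *v snd s)"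
proof -
  obtain \<kappa> \<delta>0 where k: "\<kappa> \<ge> 0" "\<delta>0 > 0" "\<And>x y us vs. y \<in> subdiff q x \<Longrightarrow> norm (x - xb) < \<delta>0 \<Longrightarrow> norm (y + f x) < \<delta>0 \<Longrightarrow>
           (us, - vs) \<in> regular_normal_cone (gph (subdiff q)) (x, y) \<Longrightarrow>
           norm vs \<le> \<kappa> * norm (us + transpose (Df x) *v vs)"
    using mr_regular[OF f_deriv metreg] by blast
  define \<eta> where "\<eta> = 1 / (2 * \<kappa> + 2)"
  have eta: "\<eta> > 0" "\<kappa> * \<eta> \<le> 1/2" unfolding \<eta>_def using k(1) by (auto simp: field_simps)
  obtain \<delta>f where df: "\<delta>f > 0" "\<forall>x. norm (x - xb) < \<delta>f \<longrightarrow> mnorm (Df x - Df xb) \<le> \<eta>"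
    using dfcont[OF eta(1)] by blast
  define \<delta> where "\<delta> = min \<delta>0 \<delta>f"
  define V where "V = {z. norm (fst z - xb) < \<delta> \<and> norm (snd z + f (fst z)) < \<delta>}"
  have fc: "continuous_on UNIV (\<lambda>z::(real^'n) \<times> (real^'n). f (fst z))"
    by (rule continuous_on_compose2[OF f_cont]) (auto intro: continuous_intros)
  have "open {z::(real^'n) \<times> (real^'n). norm (fst z - xb) < \<delta>}"
    by (rule open_Collect_less) (auto intro!: continuous_intros)
  moreover have "open {z::(real^'n) \<times> (real^'n). norm (snd z + f (fst z)) < \<delta>}"
    by (rule open_Collect_less) (auto intro!: continuous_intros fc)
  ultimately have oV: "open V" unfolding V_def by (simp add: Collect_conj_eq open_Int)
  have reg: "norm (snd r) - 2 * \<kappa> * norm (fst r - transpose (Df xb) *v snd r) \<le> 0"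
    if "z \<in> gph (subdiff q)" "z \<in> V" "r \<in> regular_normal_cone (gph (subdiff q)) z" for z r
  proof -
    obtain x y where z: "z = (x, y)" by (cases z)
    obtain us vs where r: "r = (us, - vs)" by (metis prod.collapse minus_minus)
    have y: "y \<in> subdiff q x" using that(1) unfolding z gph_def by simp
    have xV: "norm (x - xb) < \<delta>0" "norm (y + f x) < \<delta>0" "norm (x - xb) < \<delta>f"
      using that(2) unfolding z V_def \<delta>_def by auto
    have m: "norm vs \<le> \<kappa> * norm (us + transpose (Df x) *v vs)"
      using k(3)[OF y xV(1,2)] that(3) unfolding z r by blast
    have "us + transpose (Df x) *v vs = (us + transpose (Df xb) *v vs) + transpose (Df x - Df xb) *v vs"
      by (simp add: transpose_diff' matrix_vector_mult_diff_rdistrib)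
    then have "norm (us + transpose (Df x) *v vs) \<le> norm (us + transpose (Df xb) *v vs) + norm (transpose (Df x - Df xb) *v vs)"
      by (metis norm_triangle_ineq)
    also have "norm (transpose (Df x - Df xb) *v vs) \<le> \<eta> * norm vs"
    proof -
      have "norm (transpose (Df x - Df xb) *v vs) \<le> mnorm (Df x - Df xb) * norm vs"
        using mnorm_bound[of "transpose (Df x - Df xb)" vs] by (simp add: mnorm_transpose)
      also have "\<dots> \<le> \<eta> * norm vs" using df xV(3) by (intro mult_right_mono) auto
      finally show ?thesis .
    qed
    finally have "norm vs \<le> \<kappa> * norm (us + transpose (Df xb) *v vs) + \<kappa> * \<eta> * norm vs"
      using m k(1) by (smt (verit, ccfv_SIG) mult.assoc mult_left_mono distrib_left)
    moreover have "\<kappa> * \<eta> * norm vs \<le> 1/2 * norm vs" using eta by (intro mult_right_mono) auto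
    ultimately have "norm vs \<le> 2 * \<kappa> * norm (us + transpose (Df xb) *v vs)" by linarith
    moreover have "us + transpose (Df xb) *v vs = fst r - transpose (Df xb) *v snd r"
      unfolding r by (simp add: mv_neg)
    ultimately show ?thesis unfolding r by simp
  qed
  have "norm (snd s) - 2 * \<kappa> * norm (fst s - transpose (Df xb) *v snd s) \<le> 0"
    if "z \<in> V" "s \<in> limiting_normal_cone (gph (subdiff q)) z" for z s
  proof (rule limiting_closure[where g = "\<lambda>z r. norm (snd r) - 2 * \<kappa> * norm (fst r - transpose (Df xb) *v snd r)", OF oV that])
    show "continuous_on UNIV (\<lambda>p. norm (snd (snd p)) - 2 * \<kappa> * norm (fst (snd p) - transpose (Df xb) *v snd (snd p)))"
      by (intro continuous_intros bounded_linear.continuous_on[OF matrix_vector_mul_bounded_linear])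
  qed (rule reg)
  then show ?thesis using k(1) df(1) k(2) unfolding V_def \<delta>_def
    by (intro exI[of _ "2 * \<kappa>"] conjI exI[of _ "min \<delta>0 \<delta>f"]) auto
qed

lemma ss_lim:
  assumes e: "\<epsilon> > 0"
  shows "\<exists>\<delta>>0. \<forall>z s. norm (z - (xb, - f xb)) < \<delta> \<and> s \<in> limiting_normal_cone (gph (subdiff q)) z \<longrightarrow>
            \<bar>s \<bullet> (z - (xb, - f xb))\<bar> \<le> \<epsilon> * norm s * norm (z - (xb, - f xb))"
proof (rule ss_limiting[OF _ e])
  fix w s assume s: "s \<in> dir_normal_cone (gph (subdiff q)) (xb, - f xb) w"
  obtain us vs where sv: "s = (us, - vs)" by (metis prod.collapse minus_minus)
  obtain u v where wv: "w = (u, v)" by (cases w)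
  have "us \<in> dir_coderiv (subdiff q) xb (- f xb) u v vs"
    using s unfolding dir_coderiv_def sv wv by simp
  then have "us \<bullet> u = vs \<bullet> v" using ssstar unfolding semismooth_star_def by blast
  then show "s \<bullet> w = 0" unfolding sv wv by simp
qed

lemma step:
  assumes g: "\<gamma> > 0" and e: "\<epsilon> > 0"
  shows "\<exists>r>0. \<forall>x G \<Delta>. norm (x - xb) < r \<and> transpose G = G \<and> onorm (\<lambda>v. G *v v) \<le> 1
     \<and> (\<forall>vs. G *v vs \<in> coderiv (subdiff q) (x + u_gamma \<gamma> f q x) (- \<gamma> *\<^sub>R u_gamma \<gamma> f q x - f x) ((mat 1 - G) *v vs))
     \<and> ((mat 1 - G) ** Df x + G) *v \<Delta> = (\<gamma> *\<^sub>R (mat 1 - G) + G) *v u_gamma \<gamma> f q x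
     \<longrightarrow> norm (x + \<Delta> - xb) \<le> \<epsilon> * norm (x - xb)"
proof -
  obtain L \<delta>L where L: "L \<ge> 0" "\<delta>L > 0" "\<And>x. norm (x - xb) < \<delta>L \<Longrightarrow> norm (f x - f xb) \<le> L * norm (x - xb)"
    using lip by blast
  define Cu where "Cu = 1 + 2 * L / \<gamma>"
  have Cu: "Cu \<ge> 1" unfolding Cu_def using L(1) g by simp
  obtain \<kappa>2 \<delta>D where kD: "\<kappa>2 \<ge> 0" "\<delta>D > 0"
    "\<And>z s. z \<in> gph (subdiff q) \<Longrightarrow> norm (fst z - xb) < \<delta>D \<Longrightarrow> norm (snd z + f (fst z)) < \<delta>D \<Longrightarrow>
      s \<in> limiting_normal_cone (gph (subdiff q)) z \<Longrightarrow> norm (snd s) \<le> \<kappa>2 * norm (fst s - transpose (Df xb) *v snd s)"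
    using mr_limiting by blast
  define \<eta>1 where "\<eta>1 = 1 / (2 * \<kappa>2 + 2)"
  have eta1: "\<eta>1 > 0" "\<kappa>2 * \<eta>1 \<le> 1/2" unfolding \<eta>1_def using kD(1) by (auto simp: field_simps)
  define B where "B = mnorm (Df xb) + \<eta>1"
  have B: "B \<ge> 0" unfolding B_def using mnorm_nonneg[of "Df xb"] eta1 by simp
  define K where "K = 1 + 2 * \<kappa>2 * (1 + B)"
  have K: "K \<ge> 1" unfolding K_def using kD(1) B by simp
  define C1 where "C1 = (1 + Cu) + \<gamma> * Cu + L"
  have C1: "C1 \<ge> 1" unfolding C1_def using Cu g L(1) by simp
  define \<epsilon>2 where "\<epsilon>2 = \<epsilon> / (6 * K * C1)"
  define \<eta>2 where "\<eta>2 = \<epsilon> / (4 * K)"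
  have e2: "\<epsilon>2 > 0" unfolding \<epsilon>2_def using e K C1 by simp
  have et2: "\<eta>2 > 0" unfolding \<eta>2_def using e K by simp
  obtain \<delta>1 where d1: "\<delta>1 > 0" "\<And>x. norm (x - xb) < \<delta>1 \<Longrightarrow> mnorm (Df x - Df xb) \<le> \<eta>1"
    using dfcont[OF eta1(1)] by blast
  obtain \<delta>2 where d2: "\<delta>2 > 0" "\<And>x. norm (x - xb) < \<delta>2 \<Longrightarrow> norm (f x - f xb - Df x *v (x - xb)) \<le> \<eta>2 * norm (x - xb)"
    using remainder[OF et2] by blast
  obtain \<delta>E where dE: "\<delta>E > 0" "\<And>z s. norm (z - (xb, - f xb)) < \<delta>E \<Longrightarrow> s \<in> limiting_normal_cone (gph (subdiff q)) z \<Longrightarrow>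
            \<bar>s \<bullet> (z - (xb, - f xb))\<bar> \<le> \<epsilon>2 * norm s * norm (z - (xb, - f xb))"
    using ss_lim[OF e2] by blast
  define Cb where "Cb = 1 + Cu + \<gamma> * Cu + 2 * L + L * Cu"
  have Cb: "Cb \<ge> 1" "Cb \<ge> 1 + Cu" "Cb \<ge> C1" "Cb \<ge> \<gamma> * Cu + L + L * (1 + Cu)"
    unfolding Cb_def C1_def using Cu g L(1) by (auto simp: algebra_simps)
  define r where "r = Min {\<delta>L, \<delta>1, \<delta>2, \<delta>D, \<delta>E} / Cb"
  have rpos: "r > 0" unfolding r_def using L(2) d1(1) d2(1) kD(2) dE(1) Cb(1) by simp
  have rb: "Cb * r \<le> \<delta>L" "Cb * r \<le> \<delta>1" "Cb * r \<le> \<delta>2" "Cb * r \<le> \<delta>D" "Cb * r \<le> \<delta>E"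
    unfolding r_def using Cb(1) by auto
  have main: "norm (x + \<Delta> - xb) \<le> \<epsilon> * norm (x - xb)"
    if x: "norm (x - xb) < r" and Gs: "transpose G = G" and Gn: "onorm (\<lambda>v. G *v v) \<le> 1"
     and cod: "\<forall>vs. G *v vs \<in> coderiv (subdiff q) (x + u_gamma \<gamma> f q x) (- \<gamma> *\<^sub>R u_gamma \<gamma> f q x - f x) ((mat 1 - G) *v vs)"
     and sys: "((mat 1 - G) ** Df x + G) *v \<Delta> = (\<gamma> *\<^sub>R (mat 1 - G) + G) *v u_gamma \<gamma> f q x"
    for x G \<Delta>
  proof -
    define u where "u = u_gamma \<gamma> f q x"
    define e where "e = x - xb"
    define M where "M = (mat 1 - G) ** Df x + G"
    define xh where "xh = x + u"
    define yh where "yh = - \<gamma> *\<^sub>R u - f x"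
    define zb where "zb = (xb, - f xb)"
    define \<rho> where "\<rho> = f x - f xb - Df x *v e"
    have ne: "norm e \<ge> 0" by simp
    have Cbe: "Cb * norm e < Cb * r" using x Cb(1) unfolding e_def by simp
    have xL: "norm (x - xb) < \<delta>L" "norm (x - xb) < \<delta>1" "norm (x - xb) < \<delta>2"
      using Cbe rb Cb(1) ne unfolding e_def
      by (smt (verit, best) mult_le_cancel_right1 norm_ge_zero)+
    have ub: "norm u \<le> Cu * norm e" unfolding u_def e_def Cu_def using ubound[OF g L(1) L(3) xL(1)] .
    have fl: "norm (f x - f xb) \<le> L * norm e" using L(3)[OF xL(1)] unfolding e_def .
    have rho: "norm \<rho> \<le> \<eta>2 * norm e" using d2(2)[OF xL(3)] unfolding \<rho>_def e_def .
    have dfx: "mnorm (Df x - Df xb) \<le> \<eta>1" using d1(2)[OF xL(2)] .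
    have zin: "(xh, yh) \<in> gph (subdiff q)" unfolding gph_def xh_def yh_def u_def using ucar[OF g] by simp
    have xhb: "norm (xh - xb) \<le> (1 + Cu) * norm e"
    proof -
      have "norm (xh - xb) = norm (e + u)" unfolding xh_def e_def by (simp add: algebra_simps)
      also have "\<dots> \<le> norm e + norm u" by (rule norm_triangle_ineq)
      finally show ?thesis using ub by (simp add: algebra_simps)
    qed
    have xhL: "norm (xh - xb) < \<delta>L" "norm (xh - xb) < \<delta>D"
    proof -
      have "(1 + Cu) * norm e \<le> Cb * norm e" using Cb(2) ne by (rule mult_right_mono)
      then show "norm (xh - xb) < \<delta>L" "norm (xh - xb) < \<delta>D" using xhb Cbe rb by linarith+
    qed
    have yhb: "norm (yh + f xb) \<le> (\<gamma> * Cu + L) * norm e"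
    proof -
      have "yh + f xb = - (\<gamma> *\<^sub>R u) - (f x - f xb)" unfolding yh_def by (simp add: algebra_simps)
      then have "norm (yh + f xb) \<le> norm (\<gamma> *\<^sub>R u) + norm (f x - f xb)"
        by (metis norm_minus_cancel norm_triangle_ineq4)
      also have "\<dots> \<le> \<gamma> * (Cu * norm e) + L * norm e"
        using ub fl g by (intro add_mono) (auto intro: mult_left_mono)
      finally show ?thesis by (simp add: algebra_simps)
    qed
    have yhf: "norm (yh + f xh) < \<delta>D"
    proof -
      have "yh + f xh = (yh + f xb) + (f xh - f xb)" by simp
      then have "norm (yh + f xh) \<le> norm (yh + f xb) + norm (f xh - f xb)" by (metis norm_triangle_ineq)
      also have "\<dots> \<le> (\<gamma> * Cu + L) * norm e + L * ((1 + Cu) * norm e)"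
        using yhb L(3)[OF xhL(1)] xhb L(1) by (smt (verit) mult_left_mono)
      also have "\<dots> = (\<gamma> * Cu + L + L * (1 + Cu)) * norm e" by (simp add: algebra_simps)
      also have "\<dots> \<le> Cb * norm e" using Cb(4) ne by (rule mult_right_mono)
      finally show ?thesis using Cbe rb by linarith
    qed
    have zdist: "norm ((xh, yh) - zb) \<le> C1 * norm e"
    proof -
      have "norm ((xh, yh) - zb) \<le> norm (xh - xb) + norm (yh + f xb)"
        unfolding zb_def using norm_Pair_le[of "xh - xb" "yh + f xb"] by simp
      also have "\<dots> \<le> (1 + Cu) * norm e + (\<gamma> * Cu + L) * norm e" using xhb yhb by (rule add_mono)
      finally show ?thesis unfolding C1_def by (simp add: algebra_simps)
    qed
    have zE: "norm ((xh, yh) - zb) < \<delta>E"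
    proof -
      have "C1 * norm e \<le> Cb * norm e" using Cb(3) ne by (rule mult_right_mono)
      then show ?thesis using zdist Cbe rb by linarith
    qed
    have sN: "(G *v w, - ((mat 1 - G) *v w)) \<in> limiting_normal_cone (gph (subdiff q)) (xh, yh)" for w
      using cod unfolding coderiv_def xh_def yh_def u_def by blast
    have Gb: "norm (G *v v) \<le> norm v" for v by (rule G_bound[OF Gn])
    have IGb: "norm ((mat 1 - G) *v v) \<le> 2 * norm v" for v by (rule IG_bound[OF Gn])
    have MT: "transpose M *v w = transpose (Df x) *v ((mat 1 - G) *v w) + G *v w" for w
      unfolding M_def mvT_M[OF Gs] mv_IG ..
    have invb: "norm w \<le> K * norm (transpose M *v w)" for w
    proof -
      define a where "a = (mat 1 - G) *v w"
      define b where "b = G *v w"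
      have wab: "w = a + b" unfolding a_def b_def mv_IG by simp
      have D1: "norm a \<le> \<kappa>2 * norm (b + transpose (Df xb) *v a)"
        using kD(3)[OF zin, of "(G *v w, - ((mat 1 - G) *v w))"] xhL(2) yhf sN[of w]
        unfolding a_def b_def by (simp add: mv_neg)
      have "b + transpose (Df xb) *v a = transpose M *v w - transpose (Df x - Df xb) *v a"
        unfolding MT a_def b_def by (simp add: transpose_diff' matrix_vector_mult_diff_rdistrib)
      then have "norm (b + transpose (Df xb) *v a) \<le> norm (transpose M *v w) + norm (transpose (Df x - Df xb) *v a)"
        by (metis norm_triangle_ineq4)
      also have "norm (transpose (Df x - Df xb) *v a) \<le> \<eta>1 * norm a"
      proof -
        have "norm (transpose (Df x - Df xb) *v a) \<le> mnorm (Df x - Df xb) * norm a"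
          using mnorm_bound[of "transpose (Df x - Df xb)" a] by (simp add: mnorm_transpose)
        also have "\<dots> \<le> \<eta>1 * norm a" using dfx by (intro mult_right_mono) auto
        finally show ?thesis .
      qed
      finally have "norm a \<le> \<kappa>2 * norm (transpose M *v w) + \<kappa>2 * \<eta>1 * norm a"
        using D1 kD(1) by (smt (verit, ccfv_SIG) mult.assoc mult_left_mono distrib_left)
      moreover have "\<kappa>2 * \<eta>1 * norm a \<le> 1/2 * norm a" using eta1 by (intro mult_right_mono) auto
      ultimately have na: "norm a \<le> 2 * \<kappa>2 * norm (transpose M *v w)" by linarith
      have "b = transpose M *v w - transpose (Df x) *v a" unfolding MT a_def b_def by simp
      then have "norm b \<le> norm (transpose M *v w) + norm (transpose (Df x) *v a)" by (metis norm_triangle_ineq4)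
      also have "norm (transpose (Df x) *v a) \<le> B * norm a"
      proof -
        have "norm (transpose (Df x) *v a) \<le> mnorm (Df x) * norm a"
          using mnorm_bound[of "transpose (Df x)" a] by (simp add: mnorm_transpose)
        also have "mnorm (Df x) \<le> B"
          using mnorm_triangle[of "Df x - Df xb" "Df xb"] dfx unfolding B_def by simp
        then have "mnorm (Df x) * norm a \<le> B * norm a" by (intro mult_right_mono) auto
        finally show ?thesis .
      qed
      finally have nb: "norm b \<le> norm (transpose M *v w) + B * norm a" by simp
      have "norm w \<le> norm a + norm b" unfolding wab by (rule norm_triangle_ineq)
      also have "\<dots> \<le> norm a + norm (transpose M *v w) + B * norm a" using nb by simp
      also have "\<dots> = (1 + B) * norm a + norm (transpose M *v w)" by (simp add: algebra_simps)
      also have "\<dots> \<le> (1 + B) * (2 * \<kappa>2 * norm (transpose M *v w)) + norm (transpose M *v w)"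
        using na B by (intro add_mono mult_left_mono) auto
      also have "\<dots> = K * norm (transpose M *v w)" unfolding K_def by (simp add: algebra_simps)
      finally show ?thesis .
    qed
    define e' where "e' = x + \<Delta> - xb"
    have "inj ((*v) (transpose M))"
    proof (rule injI)
      fix w1 w2 assume "transpose M *v w1 = transpose M *v w2"
      then have "transpose M *v (w1 - w2) = 0" by (simp add: matrix_vector_mult_diff_distrib)
      then have "norm (w1 - w2) \<le> 0" using invb[of "w1 - w2"] by simp
      then show "w1 = w2" by simp
    qed
    then have "surj ((*v) (transpose M))"
      by (rule linear_injective_imp_surjective[OF matrix_vector_mul_linear]) simp
    then obtain w where w0: "e' = transpose M *v w" by (rule surjE)
    have w: "transpose M *v w = e'" using w0 by (rule sym)
    have Pid: "G *v (xh - xb) - (mat 1 - G) *v (yh + f xb) = M *v e' + (mat 1 - G) *v \<rho>"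
    proof -
      have "e' = e + \<Delta>" unfolding e'_def e_def by (simp add: algebra_simps)
      then have s1: "M *v e' = M *v e + M *v \<Delta>" by (simp add: matrix_vector_right_distrib)
      have s2: "M *v \<Delta> = \<gamma> *\<^sub>R (u - G *v u) + G *v u" using sys unfolding M_def u_def mv_R .
      have s3: "M *v e = Df x *v e - G *v (Df x *v e) + G *v e" unfolding M_def mv_M ..
      have s4: "yh + f xb = - \<gamma> *\<^sub>R u - Df x *v e - \<rho>" unfolding yh_def \<rho>_def by simp
      have s5: "xh - xb = e + u" unfolding xh_def e_def by simp
      have l1: "G *v (e + u) = G *v e + G *v u" by (simp add: matrix_vector_right_distrib)
      have l2: "G *v (- \<gamma> *\<^sub>R u - Df x *v e - \<rho>) = - \<gamma> *\<^sub>R (G *v u) - G *v (Df x *v e) - G *v \<rho>"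
        by (simp only: matrix_vector_mult_diff_distrib mv_neg matrix_vector_mult_scaleR scaleR_minus_left)
      show ?thesis unfolding s1 s2 s3 s4 s5 mv_IG l1 l2
        by (rule vec_id)
    qed
    define s where "s = (G *v w, - ((mat 1 - G) *v w))"
    have sdot: "s \<bullet> ((xh, yh) - zb) = w \<bullet> (M *v e') + w \<bullet> ((mat 1 - G) *v \<rho>)"
    proof -
      have "s \<bullet> ((xh, yh) - zb) = (G *v w) \<bullet> (xh - xb) - ((mat 1 - G) *v w) \<bullet> (yh + f xb)"
        unfolding s_def zb_def by simp
      also have "\<dots> = w \<bullet> (G *v (xh - xb)) - w \<bullet> ((mat 1 - G) *v (yh + f xb))"
      proof -
        have "transpose (mat 1 - G) = mat 1 - G" using Gs by (simp add: transpose_diff')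
        then show ?thesis using matrix_sym_inner[OF Gs] matrix_sym_inner[of "mat 1 - G"] by simp
      qed
      also have "\<dots> = w \<bullet> (G *v (xh - xb) - (mat 1 - G) *v (yh + f xb))" by (simp add: inner_diff_right)
      finally show ?thesis unfolding Pid by (simp add: inner_add_right)
    qed
    have sb: "norm s \<le> 3 * norm w"
      using norm_Pair_le[of "G *v w" "- ((mat 1 - G) *v w)"] Gb[of w] IGb[of w] unfolding s_def by simp
    have ss: "\<bar>s \<bullet> ((xh, yh) - zb)\<bar> \<le> \<epsilon>2 * norm s * norm ((xh, yh) - zb)"
      using dE(2)[OF zE[unfolded zb_def] sN[of w]] unfolding s_def zb_def by simp
    also have "\<dots> \<le> \<epsilon>2 * (3 * norm w) * (C1 * norm e)"
      using sb zdist e2 by (intro mult_mono) auto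
    finally have ss2: "\<bar>s \<bullet> ((xh, yh) - zb)\<bar> \<le> 3 * \<epsilon>2 * C1 * norm w * norm e" by (simp add: algebra_simps)
    have rterm: "\<bar>w \<bullet> ((mat 1 - G) *v \<rho>)\<bar> \<le> 2 * \<eta>2 * norm w * norm e"
    proof -
      have "\<bar>w \<bullet> ((mat 1 - G) *v \<rho>)\<bar> \<le> norm w * norm ((mat 1 - G) *v \<rho>)" by (rule Cauchy_Schwarz_ineq2)
      also have "\<dots> \<le> norm w * (2 * (\<eta>2 * norm e))" using IGb[of \<rho>] rho by (intro mult_left_mono) auto
      finally show ?thesis by (simp add: algebra_simps)
    qed
    have "norm e' * norm e' = (transpose M *v w) \<bullet> e'" unfolding w by (simp add: power2_norm_eq_inner[symmetric] power2_eq_square)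
    also have "\<dots> = w \<bullet> (M *v e')" by (rule transpose_inner)
    also have "\<dots> = s \<bullet> ((xh, yh) - zb) - w \<bullet> ((mat 1 - G) *v \<rho>)" unfolding sdot by simp
    also have "\<dots> \<le> 3 * \<epsilon>2 * C1 * norm w * norm e + 2 * \<eta>2 * norm w * norm e" using ss2 rterm by linarith
    also have "\<dots> = (3 * \<epsilon>2 * C1 + 2 * \<eta>2) * norm e * norm w" by (simp add: algebra_simps)
    also have "\<dots> \<le> (3 * \<epsilon>2 * C1 + 2 * \<eta>2) * norm e * (K * norm e')"
      using invb[of w] e2 et2 C1 unfolding w by (intro mult_left_mono) auto
    also have "(3 * \<epsilon>2 * C1 + 2 * \<eta>2) * K = \<epsilon>"
      unfolding \<epsilon>2_def \<eta>2_def using K C1 by (simp add: field_simps)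
    then have "(3 * \<epsilon>2 * C1 + 2 * \<eta>2) * norm e * (K * norm e') = \<epsilon> * norm e * norm e'"
      by (metis mult.assoc mult.commute)
    finally have "norm e' * norm e' \<le> (\<epsilon> * norm e) * norm e'" by simp
    then have "norm e' \<le> \<epsilon> * norm e"
      by (cases "norm e' = 0") (use e in \<open>auto simp: mult_le_cancel_right\<close>)
    then show ?thesis unfolding e'_def e_def .
  qed
  show ?thesis using rpos main by blast
qed

end

theorem theorem4p6:
  fixes f :: "real^'n \<Rightarrow> real^'n"
    and Df :: "real^'n \<Rightarrow> real^'n^'n"
    and q :: "real^'n \<Rightarrow> ereal"
    and xb :: "real^'n"
  assumes f_deriv: "\<And>x. (f has_derivative (\<lambda>h. Df x *v h)) (at x)"
    and f_C1: "continuous_on UNIV Df"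
    and q_proper: "proper_fun q" and q_convex: "convex_fun q" and q_lsc: "lsc_fun q"
    and in_gph: "(xb, 0) \<in> gph (\<lambda>x. {f x + v | v. v \<in> subdiff q x})"
    and metreg: "metrically_regular (\<lambda>x. {f x + v | v. v \<in> subdiff q x}) xb 0"
    and ssstar: "semismooth_star (subdiff q) xb (- f xb)"
  shows "\<forall>\<gamma>>0. \<exists>U. open U \<and> xb \<in> U \<and>
    (\<forall>x u G \<Delta>. x 0 \<in> U \<and>
       (\<forall>k. u k = u_gamma \<gamma> f q (x k)
          \<and> transpose (G k) = G k
          \<and> (\<forall>v. 0 \<le> v \<bullet> (G k *v v))
          \<and> onorm (\<lambda>v. G k *v v) \<le> 1
          \<and> (\<forall>vs. G k *v vs \<in> coderiv (subdiff q) (x k + u k) (- \<gamma> *\<^sub>R u k - f (x k))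
                                     ((mat 1 - G k) *v vs))
          \<and> ((mat 1 - G k) ** Df (x k) + G k) *v \<Delta> k = (\<gamma> *\<^sub>R (mat 1 - G k) + G k) *v u k
          \<and> x (Suc k) = x k + \<Delta> k)
     \<longrightarrow> x \<longlonglongrightarrow> xb \<and> (\<lambda>k. norm (x (Suc k) - xb)) \<in> o(\<lambda>k. norm (x k - xb)))"
proof (intro allI impI)
  fix \<gamma> :: real assume g: "\<gamma> > 0"
  note stp = step[OF f_deriv f_C1 q_proper q_convex q_lsc in_gph metreg ssstar g]
  obtain r where r: "r > 0" "\<And>x G \<Delta>. norm (x - xb) < r \<Longrightarrow> transpose G = G \<Longrightarrow> onorm (\<lambda>v. G *v v) \<le> 1
     \<Longrightarrow> (\<forall>vs. G *v vs \<in> coderiv (subdiff q) (x + u_gamma \<gamma> f q x) (- \<gamma> *\<^sub>R u_gamma \<gamma> f q x - f x) ((mat 1 - G) *v vs))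
     \<Longrightarrow> ((mat 1 - G) ** Df x + G) *v \<Delta> = (\<gamma> *\<^sub>R (mat 1 - G) + G) *v u_gamma \<gamma> f q x
     \<Longrightarrow> norm (x + \<Delta> - xb) \<le> (1/2) * norm (x - xb)"
    using stp[of "1/2"] by auto
  show "\<exists>U. open U \<and> xb \<in> U \<and>
    (\<forall>x u G \<Delta>. x 0 \<in> U \<and>
       (\<forall>k. u k = u_gamma \<gamma> f q (x k)
          \<and> transpose (G k) = G k
          \<and> (\<forall>v. 0 \<le> v \<bullet> (G k *v v))
          \<and> onorm (\<lambda>v. G k *v v) \<le> 1
          \<and> (\<forall>vs. G k *v vs \<in> coderiv (subdiff q) (x k + u k) (- \<gamma> *\<^sub>R u k - f (x k))
                                     ((mat 1 - G k) *v vs))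
          \<and> ((mat 1 - G k) ** Df (x k) + G k) *v \<Delta> k = (\<gamma> *\<^sub>R (mat 1 - G k) + G k) *v u k
          \<and> x (Suc k) = x k + \<Delta> k)
     \<longrightarrow> x \<longlonglongrightarrow> xb \<and> (\<lambda>k. norm (x (Suc k) - xb)) \<in> o(\<lambda>k. norm (x k - xb)))"
  proof (intro exI conjI allI impI)
    show "open (ball xb r)" by simp
    show "xb \<in> ball xb r" using r(1) by simp
    fix x u G \<Delta>
    assume A: "x 0 \<in> ball xb r \<and>
       (\<forall>k. u k = u_gamma \<gamma> f q (x k)
          \<and> transpose (G k) = G k
          \<and> (\<forall>v. 0 \<le> v \<bullet> (G k *v v))
          \<and> onorm (\<lambda>v. G k *v v) \<le> 1
          \<and> (\<forall>vs. G k *v vs \<in> coderiv (subdiff q) (x k + u k) (- \<gamma> *\<^sub>R u k - f (x k))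
                                     ((mat 1 - G k) *v vs))
          \<and> ((mat 1 - G k) ** Df (x k) + G k) *v \<Delta> k = (\<gamma> *\<^sub>R (mat 1 - G k) + G k) *v u k
          \<and> x (Suc k) = x k + \<Delta> k)"
    have x0: "norm (x 0 - xb) < r" using A by (simp add: dist_norm norm_minus_commute)
    have Hk: "u k = u_gamma \<gamma> f q (x k)" "transpose (G k) = G k" "onorm (\<lambda>v. G k *v v) \<le> 1"
      "\<forall>vs. G k *v vs \<in> coderiv (subdiff q) (x k + u_gamma \<gamma> f q (x k)) (- \<gamma> *\<^sub>R u_gamma \<gamma> f q (x k) - f (x k)) ((mat 1 - G k) *v vs)"
      "((mat 1 - G k) ** Df (x k) + G k) *v \<Delta> k = (\<gamma> *\<^sub>R (mat 1 - G k) + G k) *v u_gamma \<gamma> f q (x k)"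
      "x (Suc k) = x k + \<Delta> k" for k
    proof -
      have Ak: "u k = u_gamma \<gamma> f q (x k)
          \<and> transpose (G k) = G k
          \<and> (\<forall>v. 0 \<le> v \<bullet> (G k *v v))
          \<and> onorm (\<lambda>v. G k *v v) \<le> 1
          \<and> (\<forall>vs. G k *v vs \<in> coderiv (subdiff q) (x k + u k) (- \<gamma> *\<^sub>R u k - f (x k))
                                     ((mat 1 - G k) *v vs))
          \<and> ((mat 1 - G k) ** Df (x k) + G k) *v \<Delta> k = (\<gamma> *\<^sub>R (mat 1 - G k) + G k) *v u k
          \<and> x (Suc k) = x k + \<Delta> k" using A by blast
      have uk: "u k = u_gamma \<gamma> f q (x k)" using Ak by blast
      show "u k = u_gamma \<gamma> f q (x k)" "transpose (G k) = G k" "onorm (\<lambda>v. G k *v v) \<le> 1"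
      "\<forall>vs. G k *v vs \<in> coderiv (subdiff q) (x k + u_gamma \<gamma> f q (x k)) (- \<gamma> *\<^sub>R u_gamma \<gamma> f q (x k) - f (x k)) ((mat 1 - G k) *v vs)"
      "((mat 1 - G k) ** Df (x k) + G k) *v \<Delta> k = (\<gamma> *\<^sub>R (mat 1 - G k) + G k) *v u_gamma \<gamma> f q (x k)"
      "x (Suc k) = x k + \<Delta> k" using Ak unfolding uk[symmetric] by blast+
    qed
    have stepk: "norm (x (Suc k) - xb) \<le> \<epsilon> * norm (x k - xb)"
      if "\<epsilon> > 0" "norm (x k - xb) < r\<epsilon>"
        "\<And>x G \<Delta>. norm (x - xb) < r\<epsilon> \<Longrightarrow> transpose G = G \<Longrightarrow> onorm (\<lambda>v. G *v v) \<le> 1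
         \<Longrightarrow> (\<forall>vs. G *v vs \<in> coderiv (subdiff q) (x + u_gamma \<gamma> f q x) (- \<gamma> *\<^sub>R u_gamma \<gamma> f q x - f x) ((mat 1 - G) *v vs))
         \<Longrightarrow> ((mat 1 - G) ** Df x + G) *v \<Delta> = (\<gamma> *\<^sub>R (mat 1 - G) + G) *v u_gamma \<gamma> f q x
         \<Longrightarrow> norm (x + \<Delta> - xb) \<le> \<epsilon> * norm (x - xb)" for k \<epsilon> r\<epsilon>
      using that(3)[OF that(2) Hk(2) Hk(3) Hk(4) Hk(5)] Hk(6) by simp
    have geo: "norm (x k - xb) \<le> (1/2) ^ k * norm (x 0 - xb) \<and> norm (x k - xb) < r" for k
    proof (induction k)
      case 0 then show ?case using x0 by simp
    next
      case (Suc k)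
      have "norm (x (Suc k) - xb) \<le> (1/2) * norm (x k - xb)"
        by (rule stepk[of "1/2" k r]) (use Suc.IH r(2) in auto)
      moreover have "(1/2) * norm (x k - xb) \<le> (1/2) * ((1/2) ^ k * norm (x 0 - xb))"
        using Suc.IH by simp
      moreover have "norm (x k - xb) \<ge> 0" by simp
      moreover have "(1/2::real) ^ Suc k * norm (x 0 - xb) = 1/2 * ((1/2) ^ k * norm (x 0 - xb))" by simp
      ultimately show ?case using Suc.IH norm_ge_zero[of "x (Suc k) - xb"] by linarith
    qed
    have lim0: "(\<lambda>k. (1/2::real) ^ k * norm (x 0 - xb)) \<longlonglongrightarrow> 0 * norm (x 0 - xb)"
      by (intro tendsto_intros) simp
    have "(\<lambda>k. x k - xb) \<longlonglongrightarrow> 0"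
      by (rule Lim_null_comparison[OF _ lim0[simplified]]) (use geo in \<open>auto intro: always_eventually\<close>)
    then show "x \<longlonglongrightarrow> xb" by (rule LIM_zero_cancel)
    show "(\<lambda>k. norm (x (Suc k) - xb)) \<in> o(\<lambda>k. norm (x k - xb))"
    proof (rule landau_o.smallI)
      fix c :: real assume c: "c > 0"
      obtain rc where rc: "rc > 0" "\<And>x G \<Delta>. norm (x - xb) < rc \<Longrightarrow> transpose G = G \<Longrightarrow> onorm (\<lambda>v. G *v v) \<le> 1
         \<Longrightarrow> (\<forall>vs. G *v vs \<in> coderiv (subdiff q) (x + u_gamma \<gamma> f q x) (- \<gamma> *\<^sub>R u_gamma \<gamma> f q x - f x) ((mat 1 - G) *v vs))
         \<Longrightarrow> ((mat 1 - G) ** Df x + G) *v \<Delta> = (\<gamma> *\<^sub>R (mat 1 - G) + G) *v u_gamma \<gamma> f q x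
         \<Longrightarrow> norm (x + \<Delta> - xb) \<le> c * norm (x - xb)"
        using stp[OF c] by auto
      have "eventually (\<lambda>k. dist (x k) xb < rc) sequentially"
        using \<open>x \<longlonglongrightarrow> xb\<close> rc(1) by (rule tendstoD)
      then show "eventually (\<lambda>k. norm (norm (x (Suc k) - xb)) \<le> c * norm (norm (x k - xb))) sequentially"
      proof (rule eventually_mono)
        fix k assume "dist (x k) xb < rc"
        then have "norm (x k - xb) < rc" by (simp add: dist_norm)
        then show "norm (norm (x (Suc k) - xb)) \<le> c * norm (norm (x k - xb))"
          using stepk[OF c _ rc(2)] by simp
      qed
    qed
  qed
qed

end
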